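(* Let $T\ge1$ and let $p$ be a $T$-period random joint choice rule on a finite set $X$. Then $p$ is consistent with state independent consumption dependent random utility if and only if it satisfies marginality, complete monotonicity, and choice set independence.
   Context: $\mathcal{X}$ is the set of nonempty subsets of $X$, $\mathcal{L}(X)$ the linear orders, $N(x,A)=\{\succ: x\succ y\ \forall y\in A\setminus\{x\}\}$. Notation: $\mathbf{x}^\tau=(x_1,\dots,x_\tau)$, $\mathbf{A}^\tau=(A_1,\dots,A_\tau)\in\mathcal{X}^\tau$, and $\mathbf{x}^\tau\in\mathbf{A}^\tau$ means $x_i\in A_i$ for all $i$. A $T$-period random joint choice rule assigns to each $\mathbf{A}^T\in\mathcal{X}^T$ and $\mathbf{x}^T\in\mathbf{A}^T$ a number $p(\mathbf{x}^T,\mathbf{A}^T)\ge0$ with $\sum_{\mathbf{x}^T\in\mathbf{A}^T}p(\mathbf{x}^T,\mathbf{A}^T)=1$. For $\tau<T$ define recursively $p(\mathbf{x}^\tau,\mathbf{A}^\tau)=\sum_{y\in X}p(\mathbf{x}^\tau,y,\mathbf{A}^\tau,X)$. Marginality: for all $\tau\in\{1,\dots,T-1\}$, $\mathbf{A}^\tau$, $\mathbf{x}^\tau\in\mathbf{A}^\tau$, $B,C\in\mathcal{X}$: $\sum_{y\in B}p(\mathbf{x}^\tau,y,\mathbf{A}^\tau,B)=\sum_{y\in C}p(\mathbf{x}^\tau,y,\mathbf{A}^\tau,C)$. The Möbius inverse $q$ is defined by $p(\mathbf{x}^T,\mathbf{A}^T)=\sum_{A_1\subseteq A_1'\subseteq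 X}\cdots\sum_{A_T\subseteq A_T'\subseteq X}q(\mathbf{x}^T,A_1',\dots,A_T')$; complete monotonicity means $q\ge0$ everywhere. Choice set independence: for each $\tau\in\{1,\dots,T-1\}$, each $B\in\mathcal{X}$ and $y\in B$, and each $\mathbf{A}^\tau,\mathbf{A}'^\tau$ with $\mathbf{x}^\tau\in\mathbf{A}^\tau\cap\mathbf{A}'^\tau$, $p(\mathbf{x}^\tau,\mathbf{A}^\tau)>0$, $p(\mathbf{x}^\tau,\mathbf{A}'^\tau)>0$: $\frac{p(\mathbf{x}^\tau,y,\mathbf{A}^\tau,B)}{p(\mathbf{x}^\tau,\mathbf{A}^\tau)}=\frac{p(\mathbf{x}^\tau,y,\mathbf{A}'^\tau,B)}{p(\mathbf{x}^\tau,\mathbf{A}'^\tau)}$. A state independent transition function of degree $n$ is a map $t^n:X^n\to\Delta(\mathcal{L}(X))$, with $t^n_{\succ'}(\cdot)$ the probability of $\succ'$. $p$ is consistent with state independent consumption dependent random utility if there exist $\nu\in\Delta(\mathcal{L}(X))$ and state independent transition functions $t^1,\dots,t^{T-1}$ ($t^n$ of degree $n$) with $p(\mathbf{x}^T,\mathbf{A}^T)=\sum_{\succ_1\in N(x_1,A_1)}\cdots\sum_{\succ_T\in N(x_T,A_T)}\nu(\succ_1)\prod_{\tau=2}^T t^{\tau-1}_{\succ_\tau}(\mathbf{x}^{\tau-1})$ for all $\mathbf{A}^T$, $\mathbf{x}^T\in\mathbf{A}^T$. *)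

theory Defs
  imports Complex_Main
begin

(* The ground set X is the (finite, nonempty) universe of the type 'a::finite.
   Periods are 0-indexed list positions; a vector x^tau is a list of length tau. *)

definition menus :: "nat \<Rightarrow> 'a set list set" where
  "menus n = {As. length As = n \<and> (\<forall>A\<in>set As. A \<noteq> {})}"

definition in_menus :: "'a list \<Rightarrow> 'a set list \<Rightarrow> bool" where
  "in_menus xs As \<longleftrightarrow> list_all2 (\<in>) xs As"

definition sels :: "'a set list \<Rightarrow> 'a list set" where
  "sels As = {xs. in_menus xs As}"

definition rjcr :: "nat \<Rightarrow> ('a::finite list \<Rightarrow> 'a set list \<Rightarrow> real) \<Rightarrow> bool" where
  "rjcr T p \<longleftrightarrow> (\<forall>As\<in>menus T. (\<forall>xs\<in>sels As. p xs As \<ge> 0) \<and> (\<Sum>xs\<in>sels As. p xs As) = 1)"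

(* marg k p xs As = p(x^tau, A^tau) with tau = T - k, defined recursively:
   p(x^tau,A^tau) = sum_{y in X} p(x^tau, y, A^tau, X) *)
fun marg :: "nat \<Rightarrow> ('a::finite list \<Rightarrow> 'a set list \<Rightarrow> real) \<Rightarrow> 'a list \<Rightarrow> 'a set list \<Rightarrow> real" where
  "marg 0 p xs As = p xs As"
| "marg (Suc k) p xs As = (\<Sum>y\<in>UNIV. marg k p (xs @ [y]) (As @ [UNIV]))"

definition pp :: "nat \<Rightarrow> ('a::finite list \<Rightarrow> 'a set list \<Rightarrow> real) \<Rightarrow> 'a list \<Rightarrow> 'a set list \<Rightarrow> real" where
  "pp T p xs As = marg (T - length xs) p xs As"

definition marginality :: "nat \<Rightarrow> ('a::finite list \<Rightarrow> 'a set list \<Rightarrow> real) \<Rightarrow> bool" where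
  "marginality T p \<longleftrightarrow>
     (\<forall>\<tau>\<in>{1..T-1}. \<forall>As\<in>menus \<tau>. \<forall>xs\<in>sels As. \<forall>B C. B \<noteq> {} \<longrightarrow> C \<noteq> {} \<longrightarrow>
        (\<Sum>y\<in>B. pp T p (xs @ [y]) (As @ [B])) = (\<Sum>y\<in>C. pp T p (xs @ [y]) (As @ [C])))"

(* Moebius inverse q of p, i.e. the unique q with
   p(x^T, A^T) = sum_{A_1 \<subseteq> A_1'} ... sum_{A_T \<subseteq> A_T'} q(x^T, A_1', ..., A_T'),
   given by the Moebius inversion formula *)
definition supsets :: "'a set list \<Rightarrow> 'a set list set" where
  "supsets Bs = {As. length As = length Bs \<and> (\<forall>i<length Bs. Bs ! i \<subseteq> As ! i)}"

definition mobius :: "('a::finite list \<Rightarrow> 'a set list \<Rightarrow> real) \<Rightarrow> 'a list \<Rightarrow> 'a set list \<Rightarrow> real" where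
  "mobius p xs Bs = (\<Sum>As\<in>supsets Bs.
      (-1) ^ (\<Sum>i<length Bs. card (As ! i - Bs ! i)) * p xs As)"

definition complete_monotonicity :: "nat \<Rightarrow> ('a::finite list \<Rightarrow> 'a set list \<Rightarrow> real) \<Rightarrow> bool" where
  "complete_monotonicity T p \<longleftrightarrow> (\<forall>Bs\<in>menus T. \<forall>xs\<in>sels Bs. mobius p xs Bs \<ge> 0)"

definition choice_set_independence :: "nat \<Rightarrow> ('a::finite list \<Rightarrow> 'a set list \<Rightarrow> real) \<Rightarrow> bool" where
  "choice_set_independence T p \<longleftrightarrow>
     (\<forall>\<tau>\<in>{1..T-1}. \<forall>B y As As' xs. B \<noteq> {} \<longrightarrow> y \<in> B \<longrightarrow>
        As \<in> menus \<tau> \<longrightarrow> As' \<in> menus \<tau> \<longrightarrow> in_menus xs As \<longrightarrow> in_menus xs As' \<longrightarrow>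
        pp T p xs As > 0 \<longrightarrow> pp T p xs As' > 0 \<longrightarrow>
        pp T p (xs @ [y]) (As @ [B]) / pp T p xs As = pp T p (xs @ [y]) (As' @ [B]) / pp T p xs As')"

definition lorders :: "'a rel set" where
  "lorders = {r. strict_linear_order r}"

definition Nset :: "'a \<Rightarrow> 'a set \<Rightarrow> 'a rel set" where
  "Nset x A = {r\<in>lorders. \<forall>y\<in>A - {x}. (x, y) \<in> r}"

definition is_dist :: "('a rel \<Rightarrow> real) \<Rightarrow> bool" where
  "is_dist d \<longleftrightarrow> (\<forall>r\<in>lorders. d r \<ge> 0) \<and> (\<Sum>r\<in>lorders. d r) = 1"

definition sicdru :: "nat \<Rightarrow> ('a::finite list \<Rightarrow> 'a set list \<Rightarrow> real) \<Rightarrow> bool" where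
  "sicdru T p \<longleftrightarrow> (\<exists>(\<nu>::'a rel \<Rightarrow> real) (t::nat \<Rightarrow> 'a list \<Rightarrow> 'a rel \<Rightarrow> real).
     is_dist \<nu> \<and>
     (\<forall>n\<in>{1..T-1}. \<forall>xs. length xs = n \<longrightarrow> is_dist (t n xs)) \<and>
     (\<forall>As\<in>menus T. \<forall>xs\<in>sels As.
        p xs As = (\<Sum>rs\<in>{rs. length rs = T \<and> (\<forall>i<T. rs ! i \<in> Nset (xs ! i) (As ! i))}.
                     \<nu> (rs ! 0) * (\<Prod>i\<in>{1..<T}. t i (take i xs) (rs ! i)))))"

end

theory Submission
  imports Defs
begin


lemma alt_pow:
  assumes "finite D"
  shows "(\<Sum>C\<in>Pow D. (-1::real)^card C) = (if D = {} then 1 else 0)"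
  using assms
proof (induction D rule: finite_induct)
  case empty then show ?case by simp
next
  case (insert a D)
  have "Pow (insert a D) = Pow D \<union> insert a ` Pow D" by (rule Pow_insert)
  moreover have "Pow D \<inter> insert a ` Pow D = {}" using insert(2) by blast
  moreover have inj: "inj_on (insert a) (Pow D)" unfolding inj_on_def using insert(2) by (metis PowD insert_ident subset_iff)
  moreover have "finite (Pow D)" using insert(1) by simp
  ultimately have "(\<Sum>C\<in>Pow (insert a D). (-1::real)^card C) =
     (\<Sum>C\<in>Pow D. (-1::real)^card C) + (\<Sum>C\<in>Pow D. (-1::real)^card (insert a C))"
    by (simp add: sum.union_disjoint sum.reindex)
  also have "(\<Sum>C\<in>Pow D. (-1::real)^card (insert a C)) = (\<Sum>C\<in>Pow D. - ((-1::real)^card C))"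
  proof (rule sum.cong)
    fix C assume "C \<in> Pow D"
    then have "finite C" "a \<notin> C" using insert(1,2) finite_subset by auto
    then show "(-1::real)^card (insert a C) = - ((-1::real)^card C)" by simp
  qed simp
  finally show ?case by (simp add: sum_negf)
qed

lemma alt_interval:
  assumes "finite S" "B \<subseteq> S"
  shows "(\<Sum>A\<in>{A. B \<subseteq> A \<and> A \<subseteq> S}. (-1::real)^card (A - B)) = (if S = B then 1 else 0)"
proof -
  have img: "{A. B \<subseteq> A \<and> A \<subseteq> S} = (\<lambda>C. B \<union> C) ` Pow (S - B)"
  proof (intro equalityI subsetI)
    fix A assume "A \<in> {A. B \<subseteq> A \<and> A \<subseteq> S}"
    then have "A = B \<union> (A - B)" "A - B \<in> Pow (S - B)" by blast+
    then show "A \<in> (\<lambda>C. B \<union> C) ` Pow (S - B)" by blast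
  next
    fix A assume "A \<in> (\<lambda>C. B \<union> C) ` Pow (S - B)"
    then show "A \<in> {A. B \<subseteq> A \<and> A \<subseteq> S}" using assms(2) by blast
  qed
  have inj: "inj_on (\<lambda>C. B \<union> C) (Pow (S - B))" unfolding inj_on_def by blast
  have "(\<Sum>A\<in>{A. B \<subseteq> A \<and> A \<subseteq> S}. (-1::real)^card (A - B)) = (\<Sum>C\<in>Pow (S - B). (-1::real)^card (B \<union> C - B))"
    unfolding img by (simp add: sum.reindex[OF inj])
  also have "\<dots> = (\<Sum>C\<in>Pow (S - B). (-1::real)^card C)"
  proof (rule sum.cong)
    fix C assume "C \<in> Pow (S - B)"
    then have "B \<union> C - B = C" by blast
    then show "(-1::real)^card (B \<union> C - B) = (-1::real)^card C" by simp
  qed simp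
  also have "\<dots> = (if S = B then 1 else 0)" using assms by (simp add: alt_pow)
  finally show ?thesis .
qed


definition lists_in :: "nat \<Rightarrow> (nat \<Rightarrow> 'b set) \<Rightarrow> 'b list set" where
  "lists_in n S = {xs. length xs = n \<and> (\<forall>i<n. xs ! i \<in> S i)}"

lemma lists_in_0: "lists_in 0 S = {[]}"
  by (auto simp: lists_in_def)

lemma lists_in_Suc: "lists_in (Suc n) S = (\<lambda>(xs, a). xs @ [a]) ` (lists_in n S \<times> S n)"
proof (intro equalityI subsetI)
  fix ys assume ys: "ys \<in> lists_in (Suc n) S"
  then have "ys \<noteq> []" by (auto simp: lists_in_def)
  then have e: "ys = butlast ys @ [last ys]" by simp
  have "butlast ys \<in> lists_in n S"
    using ys unfolding lists_in_def by (auto simp: nth_butlast)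
  moreover have "last ys \<in> S n"
    using ys \<open>ys \<noteq> []\<close> unfolding lists_in_def by (auto simp: last_conv_nth)
  ultimately show "ys \<in> (\<lambda>(xs, a). xs @ [a]) ` (lists_in n S \<times> S n)"
    using e by (metis (no_types, lifting) SigmaI case_prod_conv image_eqI)
next
  fix ys assume "ys \<in> (\<lambda>(xs, a). xs @ [a]) ` (lists_in n S \<times> S n)"
  then obtain xs a where "ys = xs @ [a]" "xs \<in> lists_in n S" "a \<in> S n" by auto
  then show "ys \<in> lists_in (Suc n) S"
    unfolding lists_in_def by (auto simp: nth_append less_Suc_eq)
qed

lemma inj_snoc: "inj_on (\<lambda>(xs, a). xs @ [a]) X"
  by (auto simp: inj_on_def)

lemma finite_lists_in:
  assumes "\<And>i. i < n \<Longrightarrow> finite (S i)" shows "finite (lists_in n S)"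
  using assms
proof (induction n)
  case 0 show ?case by (simp add: lists_in_0)
next
  case (Suc n)
  have "finite (lists_in n S)" using Suc.prems by (intro Suc.IH) simp
  then show ?case using Suc.prems by (simp add: lists_in_Suc)
qed

lemma sum_prod_lists_in:
  fixes f :: "nat \<Rightarrow> 'b \<Rightarrow> real"
  assumes "\<And>i. i < n \<Longrightarrow> finite (S i)"
  shows "(\<Sum>xs\<in>lists_in n S. \<Prod>i<n. f i (xs ! i)) = (\<Prod>i<n. \<Sum>a\<in>S i. f i a)"
  using assms
proof (induction n)
  case 0 then show ?case by (simp add: lists_in_0)
next
  case (Suc n)
  have fin: "finite (lists_in n S)" by (rule finite_lists_in) (simp add: Suc.prems)
  have "(\<Sum>xs\<in>lists_in (Suc n) S. \<Prod>i<Suc n. f i (xs ! i))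
      = (\<Sum>(xs, a)\<in>lists_in n S \<times> S n. \<Prod>i<Suc n. f i ((xs @ [a]) ! i))"
    unfolding lists_in_Suc by (subst sum.reindex[OF inj_snoc]) (simp add: case_prod_unfold)
  also have "\<dots> = (\<Sum>(xs, a)\<in>lists_in n S \<times> S n. (\<Prod>i<n. f i (xs ! i)) * f n a)"
  proof (rule sum.cong, simp, clarify)
    fix xs a assume "xs \<in> lists_in n S"
    then have l: "length xs = n" by (simp add: lists_in_def)
    have "(\<Prod>i<Suc n. f i ((xs @ [a]) ! i)) = (\<Prod>i<n. f i ((xs @ [a]) ! i)) * f n a"
      using l by (simp add: nth_append)
    also have "(\<Prod>i<n. f i ((xs @ [a]) ! i)) = (\<Prod>i<n. f i (xs ! i))"
      by (rule prod.cong) (auto simp: nth_append l)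
    finally show "(\<Prod>i<Suc n. f i ((xs @ [a]) ! i)) = (\<Prod>i<n. f i (xs ! i)) * f n a" .
  qed
  also have "\<dots> = (\<Sum>xs\<in>lists_in n S. \<Prod>i<n. f i (xs ! i)) * (\<Sum>a\<in>S n. f n a)"
    by (simp add: sum.cartesian_product[symmetric] sum_product)
  also have "\<dots> = (\<Prod>i<Suc n. \<Sum>a\<in>S i. f i a)"
    using Suc by simp
  finally show ?case .
qed

definition rum :: "('a rel \<Rightarrow> real) \<Rightarrow> 'a \<Rightarrow> 'a set \<Rightarrow> real" where
  "rum d x A = (\<Sum>r\<in>Nset x A. d r)"

lemma finite_lorders: "finite (lorders :: ('a::finite) rel set)"
  by (rule finite_subset[OF subset_UNIV]) simp

lemma finite_Nset: "finite (Nset x (A :: ('a::finite) set))"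
  by (rule finite_subset[OF _ finite_lorders]) (auto simp: Nset_def)

lemma lorders_props:
  assumes "r \<in> lorders"
  shows "trans r" "irrefl r" "\<And>x y. x \<noteq> y \<Longrightarrow> (x, y) \<in> r \<or> (y, x) \<in> r"
proof -
  have s: "strict_linear_order r" using assms by (simp add: lorders_def)
  then show "trans r" "irrefl r" unfolding strict_linear_order_on_def by simp_all
  fix x y :: 'a assume "x \<noteq> y"
  then show "(x, y) \<in> r \<or> (y, x) \<in> r" using s unfolding strict_linear_order_on_def total_on_def by blast
qed

lemma lorder_max:
  assumes r: "r \<in> lorders" and A: "finite A" "A \<noteq> {}"
  shows "\<exists>x\<in>A. \<forall>y\<in>A - {x}. (x, y) \<in> r"
  using A
proof (induction A rule: finite_ne_induct)
  case (singleton x) then show ?case by simp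
next
  case (insert a A)
  then obtain x where x: "x \<in> A" "\<forall>y\<in>A - {x}. (x, y) \<in> r" by blast
  note tr = lorders_props(1)[OF r] and tot = lorders_props(3)[OF r]
  have "a \<noteq> x" using \<open>a \<notin> A\<close> x(1) by blast
  show ?case
  proof (cases "(a, x) \<in> r")
    case True
    have "(a, y) \<in> r" if "y \<in> insert a A - {a}" for y
    proof (cases "y = x")
      case True then show ?thesis using \<open>(a, x) \<in> r\<close> by simp
    next
      case False
      then have "(x, y) \<in> r" using that x by blast
      then show ?thesis using transD[OF tr \<open>(a, x) \<in> r\<close>] by blast
    qed
    then show ?thesis by (intro bexI[of _ a]) auto
  next
    case False
    then have "(x, a) \<in> r" using tot \<open>a \<noteq> x\<close> by blast
    then have "\<forall>y\<in>insert a A - {x}. (x, y) \<in> r" using x(2) by blast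
    then show ?thesis using x(1) by (intro bexI[of _ x]) auto
  qed
qed

lemma lorder_max_unique:
  assumes r: "r \<in> lorders" and "x \<in> A" "x' \<in> A"
    "\<forall>y\<in>A - {x}. (x, y) \<in> r" "\<forall>y\<in>A - {x'}. (x', y) \<in> r"
  shows "x = x'"
proof (rule ccontr)
  assume ne: "x \<noteq> x'"
  have 1: "x' \<in> A - {x}" using assms(3) ne by simp
  have 2: "x \<in> A - {x'}" using assms(2) ne by simp
  have "(x, x') \<in> r" using assms(4) 1 by (rule bspec)
  moreover have "(x', x) \<in> r" using assms(5) 2 by (rule bspec)
  ultimately have "(x, x) \<in> r" by (rule transD[OF lorders_props(1)[OF r]])
  then show False using irreflD[OF lorders_props(2)[OF r]] by (rule notE[rotated])
qed

lemma rum_sum: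
  fixes d :: "('a::finite) rel \<Rightarrow> real"
  assumes d: "is_dist d" and A: "A \<noteq> {}"
  shows "(\<Sum>x\<in>A. rum d x A) = 1"
proof -
  have "(\<Sum>x\<in>A. rum d x A) = (\<Sum>x\<in>A. \<Sum>r\<in>{r\<in>lorders. r \<in> Nset x A}. d r)"
  proof -
    have "\<And>x. {r\<in>lorders. r \<in> Nset x A} = Nset x A" unfolding Nset_def by blast
    then show ?thesis unfolding rum_def by simp
  qed
  also have "\<dots> = (\<Sum>r\<in>lorders. \<Sum>x\<in>{x\<in>A. r \<in> Nset x A}. d r)"
    by (rule sum.swap_restrict) (simp_all add: finite_lorders)
  also have "\<dots> = (\<Sum>r\<in>lorders. d r)"
  proof (rule sum.cong)
    fix r :: "'a rel" assume r: "r \<in> lorders"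
    obtain x where x: "x \<in> A" "\<forall>y\<in>A - {x}. (x, y) \<in> r" using lorder_max[OF r finite_UNIV[THEN finite_subset[OF subset_UNIV]] A] by blast
    have "{x\<in>A. r \<in> Nset x A} = {x}"
    proof (intro equalityI subsetI)
      fix z assume "z \<in> {x\<in>A. r \<in> Nset x A}"
      then have "z \<in> A" "\<forall>y\<in>A - {z}. (z, y) \<in> r" unfolding Nset_def by auto
      then have "z = x" using lorder_max_unique[OF r _ x(1) _ x(2)] by blast
      then show "z \<in> {x}" by simp
    next
      fix z assume "z \<in> {x}"
      then show "z \<in> {x\<in>A. r \<in> Nset x A}" using x r unfolding Nset_def by simp
    qed
    then show "(\<Sum>x\<in>{x\<in>A. r \<in> Nset x A}. d r) = d r" by simp
  qed simp
  finally show ?thesis using d by (simp add: is_dist_def)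
qed

lemma rum_nonneg: "is_dist d \<Longrightarrow> 0 \<le> rum d x A"
  unfolding rum_def is_dist_def Nset_def by (auto intro!: sum_nonneg)

definition mob1 :: "('a::finite set \<Rightarrow> real) \<Rightarrow> 'a set \<Rightarrow> real" where
  "mob1 g B = (\<Sum>A\<in>{A. B \<subseteq> A}. (-1)^card (A - B) * g A)"

lemma mob1_rum_nonneg:
  fixes d :: "('a::finite) rel \<Rightarrow> real"
  assumes d: "is_dist d"
  shows "0 \<le> mob1 (rum d x) B"
proof -
  define S where "S r = insert x {y. (x, y) \<in> r}" for r :: "'a rel"
  have rum_eq: "rum d x A = (\<Sum>r\<in>lorders. d r * (if A \<subseteq> S r then 1 else 0))" for A
  proof -
    have "(\<forall>y\<in>A - {x}. (x, y) \<in> r) \<longleftrightarrow> A \<subseteq> S r" for r unfolding S_def by blast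
    then have "Nset x A = {r\<in>lorders. A \<subseteq> S r}" unfolding Nset_def by simp
    then show ?thesis unfolding rum_def by (simp add: sum.inter_filter[OF finite_lorders] if_distrib cong: if_cong)
  qed
  have "mob1 (rum d x) B = (\<Sum>A\<in>{A. B \<subseteq> A}. \<Sum>r\<in>lorders. (-1)^card (A - B) * (d r * (if A \<subseteq> S r then 1 else 0)))"
    unfolding mob1_def rum_eq by (simp add: sum_distrib_left)
  also have "\<dots> = (\<Sum>r\<in>lorders. d r * (\<Sum>A\<in>{A. B \<subseteq> A}. (-1)^card (A - B) * (if A \<subseteq> S r then 1 else 0)))"
    by (subst sum.swap) (simp add: sum_distrib_left mult_ac)
  also have "\<dots> \<ge> 0"
  proof (rule sum_nonneg)
    fix r :: "'a rel" assume r: "r \<in> lorders"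
    have "(\<Sum>A\<in>{A. B \<subseteq> A}. (-1::real)^card (A - B) * (if A \<subseteq> S r then 1 else 0))
        = (\<Sum>A\<in>{A\<in>{A. B \<subseteq> A}. A \<subseteq> S r}. (-1::real)^card (A - B))"
      by (subst sum.inter_filter) (auto intro!: sum.cong)
    also have "{A\<in>{A. B \<subseteq> A}. A \<subseteq> S r} = {A. B \<subseteq> A \<and> A \<subseteq> S r}" by blast
    finally have e: "(\<Sum>A\<in>{A. B \<subseteq> A}. (-1::real)^card (A - B) * (if A \<subseteq> S r then 1 else 0))
        = (\<Sum>A\<in>{A. B \<subseteq> A \<and> A \<subseteq> S r}. (-1::real)^card (A - B))" .
    have "0 \<le> (\<Sum>A\<in>{A. B \<subseteq> A \<and> A \<subseteq> S r}. (-1::real)^card (A - B))"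
    proof (cases "B \<subseteq> S r")
      case True then show ?thesis by (simp add: alt_interval)
    next
      case False then have e2: "{A. B \<subseteq> A \<and> A \<subseteq> S r} = {}" by blast
      show ?thesis unfolding e2 by simp
    qed
    then show "0 \<le> d r * (\<Sum>A\<in>{A. B \<subseteq> A}. (-1::real)^card (A - B) * (if A \<subseteq> S r then 1 else 0))"
      using d r e by (simp add: is_dist_def)
  qed
  finally show ?thesis .
qed


lemma alt_interval_down:
  assumes "finite C" "A \<subseteq> C"
  shows "(\<Sum>B\<in>{B. A \<subseteq> B \<and> B \<subseteq> C}. (-1::real)^card (C - B)) = (if C = A then 1 else 0)"
proof -
  have img: "{B. A \<subseteq> B \<and> B \<subseteq> C} = (\<lambda>D. C - D) ` Pow (C - A)"
  proof (intro equalityI subsetI)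
    fix B assume "B \<in> {B. A \<subseteq> B \<and> B \<subseteq> C}"
    then have "B = C - (C - B)" "C - B \<in> Pow (C - A)" by blast+
    then show "B \<in> (\<lambda>D. C - D) ` Pow (C - A)" by blast
  next
    fix B assume "B \<in> (\<lambda>D. C - D) ` Pow (C - A)"
    then show "B \<in> {B. A \<subseteq> B \<and> B \<subseteq> C}" using assms(2) by blast
  qed
  have inj: "inj_on (\<lambda>D. C - D) (Pow (C - A))" unfolding inj_on_def by blast
  have "(\<Sum>B\<in>{B. A \<subseteq> B \<and> B \<subseteq> C}. (-1::real)^card (C - B)) = (\<Sum>D\<in>Pow (C - A). (-1::real)^card (C - (C - D)))"
    unfolding img by (simp add: sum.reindex[OF inj])
  also have "\<dots> = (\<Sum>D\<in>Pow (C - A). (-1::real)^card D)"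
  proof (rule sum.cong)
    fix D assume "D \<in> Pow (C - A)"
    then have "C - (C - D) = D" by blast
    then show "(-1::real)^card (C - (C - D)) = (-1::real)^card D" by simp
  qed simp
  also have "\<dots> = (if C = A then 1 else 0)" using assms by (simp add: alt_pow finite_subset)
  finally show ?thesis .
qed

definition perms :: "'a set \<Rightarrow> 'a list set" where
  "perms A = {zs. distinct zs \<and> set zs = A}"

lemma finite_perms: "finite (perms (A :: ('a::finite) set))"
proof -
  have "perms A \<subseteq> {zs. set zs \<subseteq> UNIV \<and> length zs = card A}"
  proof
    fix zs assume "zs \<in> perms A"
    then have "distinct zs" "set zs = A" by (auto simp: perms_def)
    then have "length zs = card A" using distinct_card by metis
    then show "zs \<in> {zs. set zs \<subseteq> UNIV \<and> length zs = card A}" by simp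
  qed
  moreover have "finite {zs. set zs \<subseteq> (UNIV::'a set) \<and> length zs = card A}"
    by (rule finite_lists_length_eq) simp
  ultimately show ?thesis by (rule finite_subset)
qed

lemma perms_empty: "perms {} = {[]}"
  unfolding perms_def by auto

lemma perms_cons_eq:
  assumes "A \<noteq> {}"
  shows "perms A = (\<lambda>(z, zs). z # zs) ` (SIGMA z:A. perms (A - {z}))"
proof (intro equalityI subsetI)
  fix ys assume "ys \<in> perms A"
  then have d: "distinct ys" "set ys = A" by (auto simp: perms_def)
  then obtain z zs where ys: "ys = z # zs" using assms by (cases ys) auto
  then have "z \<in> A" "zs \<in> perms (A - {z})" using d by (auto simp: perms_def)
  then show "ys \<in> (\<lambda>(z, zs). z # zs) ` (SIGMA z:A. perms (A - {z}))"
    using ys by (intro image_eqI[of _ _ "(z, zs)"]) auto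
next
  fix ys assume "ys \<in> (\<lambda>(z, zs). z # zs) ` (SIGMA z:A. perms (A - {z}))"
  then obtain z zs where "ys = z # zs" "z \<in> A" "zs \<in> perms (A - {z})" by auto
  then show "ys \<in> perms A" unfolding perms_def by auto
qed

lemma perms_snoc_eq:
  assumes "A \<noteq> {}"
  shows "perms A = (\<lambda>(z, zs). zs @ [z]) ` (SIGMA z:A. perms (A - {z}))"
proof (intro equalityI subsetI)
  fix ys assume "ys \<in> perms A"
  then have d: "distinct ys" "set ys = A" by (auto simp: perms_def)
  then have "ys \<noteq> []" using assms by auto
  then obtain z zs where ys: "ys = zs @ [z]" by (metis rev_exhaust)
  then have "z \<in> A" "zs \<in> perms (A - {z})" using d by (auto simp: perms_def)
  then show "ys \<in> (\<lambda>(z, zs). zs @ [z]) ` (SIGMA z:A. perms (A - {z}))"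
    using ys by (intro image_eqI[of _ _ "(z, zs)"]) auto
next
  fix ys assume "ys \<in> (\<lambda>(z, zs). zs @ [z]) ` (SIGMA z:A. perms (A - {z}))"
  then obtain z zs where "ys = zs @ [z]" "z \<in> A" "zs \<in> perms (A - {z})" by auto
  then show "ys \<in> perms A" unfolding perms_def by auto
qed

lemma sum_perms_cons:
  fixes h :: "('a::finite) list \<Rightarrow> real"
  assumes "A \<noteq> {}"
  shows "(\<Sum>zs\<in>perms A. h zs) = (\<Sum>z\<in>A. \<Sum>zs\<in>perms (A - {z}). h (z # zs))"
proof -
  have inj: "inj_on (\<lambda>(z, zs). z # zs) (SIGMA z:A. perms (A - {z}))"
    by (auto simp: inj_on_def)
  show ?thesis
    unfolding perms_cons_eq[OF assms] sum.reindex[OF inj]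
    by (subst sum.Sigma) (auto simp: finite_perms case_prod_unfold)
qed

lemma sum_perms_snoc:
  fixes h :: "('a::finite) list \<Rightarrow> real"
  assumes "A \<noteq> {}"
  shows "(\<Sum>zs\<in>perms A. h zs) = (\<Sum>z\<in>A. \<Sum>zs\<in>perms (A - {z}). h (zs @ [z]))"
proof -
  have inj: "inj_on (\<lambda>(z, zs). zs @ [z]) (SIGMA z:A. perms (A - {z}))"
    by (auto simp: inj_on_def)
  show ?thesis
    unfolding perms_snoc_eq[OF assms] sum.reindex[OF inj]
    by (subst sum.Sigma) (auto simp: finite_perms case_prod_unfold)
qed


locale falm =
  fixes f :: "'a::finite \<Rightarrow> 'a set \<Rightarrow> real"
  assumes sum1: "\<And>A. A \<noteq> {} \<Longrightarrow> (\<Sum>x\<in>A. f x A) = 1"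
    and mob_nn: "\<And>x B. x \<in> B \<Longrightarrow> 0 \<le> mob1 (f x) B"
begin

definition q :: "'a \<Rightarrow> 'a set \<Rightarrow> real" where "q x B = mob1 (f x) B"
definition m :: "'a set \<Rightarrow> real" where "m A = (if A = {} then 1 else (\<Sum>x\<in>A. q x A))"

lemma q_nn: "x \<in> B \<Longrightarrow> 0 \<le> q x B"
  unfolding q_def by (rule mob_nn)

lemma inversion: "f x A = (\<Sum>B\<in>{B. A \<subseteq> B}. q x B)"
proof -
  have "(\<Sum>B\<in>{B. A \<subseteq> B}. q x B) = (\<Sum>B\<in>{B. A \<subseteq> B}. \<Sum>C\<in>{C\<in>{C. A \<subseteq> C}. B \<subseteq> C}. (-1::real)^card (C - B) * f x C)"
  proof (rule sum.cong)
    fix B assume "B \<in> {B. A \<subseteq> B}"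
    then have "{C\<in>{C. A \<subseteq> C}. B \<subseteq> C} = {C. B \<subseteq> C}" by blast
    then show "q x B = (\<Sum>C\<in>{C\<in>{C. A \<subseteq> C}. B \<subseteq> C}. (-1::real)^card (C - B) * f x C)"
      unfolding q_def mob1_def by simp
  qed simp
  also have "\<dots> = (\<Sum>C\<in>{C. A \<subseteq> C}. \<Sum>B\<in>{B\<in>{B. A \<subseteq> B}. B \<subseteq> C}. (-1::real)^card (C - B) * f x C)"
    by (rule sum.swap_restrict) simp_all
  also have "\<dots> = (\<Sum>C\<in>{C. A \<subseteq> C}. (if C = A then 1 else 0) * f x C)"
  proof (rule sum.cong)
    fix C assume "C \<in> {C. A \<subseteq> C}"
    then have "A \<subseteq> C" by simp
    have "{B\<in>{B. A \<subseteq> B}. B \<subseteq> C} = {B. A \<subseteq> B \<and> B \<subseteq> C}" by blast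
    then show "(\<Sum>B\<in>{B\<in>{B. A \<subseteq> B}. B \<subseteq> C}. (-1::real)^card (C - B) * f x C) = (if C = A then 1 else 0) * f x C"
      using alt_interval_down[OF _ \<open>A \<subseteq> C\<close>] by (simp add: sum_distrib_right[symmetric])
  qed simp
  also have "\<dots> = f x A"
  proof -
    have "\<And>C. (if C = A then 1 else 0) * f x C = (if C = A then f x C else 0)" by simp
    then show ?thesis by (simp add: sum.delta)
  qed
  finally show ?thesis by simp
qed

lemma q_UNIV: "q x UNIV = f x UNIV"
proof -
  have "{A. (UNIV::'a set) \<subseteq> A} = {UNIV}" by auto
  then show ?thesis unfolding q_def mob1_def by simp
qed

lemma m_UNIV: "m UNIV = 1"
  unfolding m_def q_UNIV using sum1[of UNIV] by simp

lemma m_nn: "0 \<le> m A"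
  unfolding m_def using q_nn by (auto intro!: sum_nonneg)

lemma q_le_m: "x \<in> B \<Longrightarrow> q x B \<le> m B"
proof -
  assume x: "x \<in> B"
  then have "B \<noteq> {}" by blast
  then have "m B = (\<Sum>y\<in>B. q y B)" unfolding m_def by simp
  moreover have "q x B \<le> (\<Sum>y\<in>B. q y B)"
    by (rule member_le_sum[OF x]) (auto intro: q_nn)
  ultimately show ?thesis by simp
qed

lemma flow:
  assumes A: "A \<noteq> UNIV"
  shows "(\<Sum>y\<in>-A. q y (insert y A)) = m A"
proof -
  define s where "s C = (-1::real)^card (C - A)" for C
  have L: "(\<Sum>y\<in>-A. q y (insert y A)) = - (\<Sum>C\<in>{C. A \<subseteq> C}. s C * (\<Sum>y\<in>C - A. f y C))"
  proof -
    have "(\<Sum>y\<in>-A. q y (insert y A)) = (\<Sum>y\<in>-A. \<Sum>C\<in>{C\<in>{C. A \<subseteq> C}. y \<in> C}. - (s C * f y C))"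
    proof (rule sum.cong)
      fix y assume y: "y \<in> -A"
      have e: "{C\<in>{C. A \<subseteq> C}. y \<in> C} = {C. insert y A \<subseteq> C}" by blast
      have "(-1::real)^card (C - insert y A) = - s C" if "insert y A \<subseteq> C" for C
      proof -
        have "C - A = insert y (C - insert y A)" using that y by blast
        moreover have "y \<notin> C - insert y A" by blast
        ultimately have "card (C - A) = Suc (card (C - insert y A))" by simp
        then show ?thesis unfolding s_def by simp
      qed
      then show "q y (insert y A) = (\<Sum>C\<in>{C\<in>{C. A \<subseteq> C}. y \<in> C}. - (s C * f y C))"
        unfolding e q_def mob1_def by (intro sum.cong) simp_all
    qed simp
    also have "\<dots> = (\<Sum>C\<in>{C. A \<subseteq> C}. \<Sum>y\<in>{y\<in>-A. y \<in> C}. - (s C * f y C))"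
      by (rule sum.swap_restrict) simp_all
    also have "\<dots> = (\<Sum>C\<in>{C. A \<subseteq> C}. - (s C * (\<Sum>y\<in>C - A. f y C)))"
    proof (rule sum.cong)
      fix C :: "'a set"
      have "{y\<in>-A. y \<in> C} = C - A" by blast
      then show "(\<Sum>y\<in>{y\<in>-A. y \<in> C}. - (s C * f y C)) = - (s C * (\<Sum>y\<in>C - A. f y C))"
        by (simp add: sum_negf sum_distrib_left)
    qed simp
    finally show ?thesis by (simp add: sum_negf)
  qed
  have R: "(\<Sum>x\<in>A. q x A) = (\<Sum>C\<in>{C. A \<subseteq> C}. s C * (\<Sum>x\<in>A. f x C))"
    unfolding q_def mob1_def s_def sum_distrib_left
    by (rule sum.swap)
  have "(\<Sum>x\<in>A. q x A) - (\<Sum>y\<in>-A. q y (insert y A)) = (\<Sum>C\<in>{C. A \<subseteq> C}. s C * (\<Sum>x\<in>C. f x C))"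
  proof -
    have "(\<Sum>x\<in>A. q x A) - (\<Sum>y\<in>-A. q y (insert y A))
        = (\<Sum>C\<in>{C. A \<subseteq> C}. s C * ((\<Sum>x\<in>A. f x C) + (\<Sum>y\<in>C - A. f y C)))"
      unfolding L R by (simp add: distrib_left sum.distrib)
    also have "\<dots> = (\<Sum>C\<in>{C. A \<subseteq> C}. s C * (\<Sum>x\<in>C. f x C))"
    proof (rule sum.cong)
      fix C assume "C \<in> {C. A \<subseteq> C}"
      then have "C = A \<union> (C - A)" by blast
      then have "(\<Sum>x\<in>C. f x C) = (\<Sum>x\<in>A. f x C) + (\<Sum>y\<in>C - A. f y C)"
        by (metis Diff_disjoint finite sum.union_disjoint)
      then show "s C * ((\<Sum>x\<in>A. f x C) + (\<Sum>y\<in>C - A. f y C)) = s C * (\<Sum>x\<in>C. f x C)" by simp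
    qed simp
    finally show ?thesis .
  qed
  also have "\<dots> = (\<Sum>C\<in>{C. A \<subseteq> C}. s C - (if C = {} then s C else 0))"
  proof (rule sum.cong)
    fix C :: "'a set"
    show "s C * (\<Sum>x\<in>C. f x C) = s C - (if C = {} then s C else 0)"
      using sum1[of C] by (cases "C = {}") simp_all
  qed simp
  also have "\<dots> = (\<Sum>C\<in>{C. A \<subseteq> C}. s C) - (\<Sum>C\<in>{C. A \<subseteq> C}. if C = {} then s C else 0)"
    by (simp add: sum_subtractf)
  also have "(\<Sum>C\<in>{C. A \<subseteq> C}. s C) = 0"
  proof -
    have "{C. A \<subseteq> C} = {C. A \<subseteq> C \<and> C \<subseteq> UNIV}" by simp
    then show ?thesis unfolding s_def using alt_interval[of UNIV A] A by simp
  qed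
  also have "(\<Sum>C\<in>{C. A \<subseteq> C}. if C = {} then s C else 0) = (if A = {} then 1 else 0)"
    by (subst sum.delta) (simp_all add: s_def)
  finally have "(\<Sum>x\<in>A. q x A) - (\<Sum>y\<in>-A. q y (insert y A)) = - (if A = {} then 1 else 0)" by simp
  then show ?thesis unfolding m_def by (cases "A = {}") simp_all
qed

lemma q_le_m_minus:
  assumes z: "z \<in> A"
  shows "q z A \<le> m (A - {z})"
proof -
  have ne: "A - {z} \<noteq> UNIV" by blast
  have "q z A = q z (insert z (A - {z}))" using z by (simp add: insert_absorb)
  also have "\<dots> \<le> (\<Sum>y\<in>-(A - {z}). q y (insert y (A - {z})))"
    by (rule member_le_sum) (auto intro: q_nn)
  also have "\<dots> = m (A - {z})" by (rule flow[OF ne])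
  finally show ?thesis .
qed

end


context falm
begin

fun W :: "'a set \<Rightarrow> 'a list \<Rightarrow> real" where
  "W A [] = 1"
| "W A (z # zs) = q z A / m A * W (A - {z}) zs"

lemma W_append: "W A (us @ ws) = W A us * W (A - set us) ws"
proof (induction us arbitrary: A)
  case Nil then show ?case by simp
next
  case (Cons z us)
  have "A - {z} - set us = A - set (z # us)" by auto
  then show ?case using Cons[of "A - {z}"] by simp
qed

lemma W_nonneg: "distinct zs \<Longrightarrow> set zs \<subseteq> A \<Longrightarrow> 0 \<le> W A zs"
proof (induction zs arbitrary: A)
  case Nil then show ?case by simp
next
  case (Cons z zs)
  have "0 \<le> W (A - {z}) zs" using Cons by (intro Cons.IH) auto
  moreover have "0 \<le> q z A" using Cons.prems by (intro q_nn) auto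
  ultimately show ?case using m_nn[of A] by simp
qed

lemma L1:
  assumes "A = {} \<or> 0 < m A"
  shows "(\<Sum>zs\<in>perms A. W A zs) = 1"
  using assms
proof (induction "card A" arbitrary: A rule: less_induct)
  case less
  show ?case
  proof (cases "A = {}")
    case True then show ?thesis by (simp add: perms_empty)
  next
    case False
    then have mA: "0 < m A" using less.prems by simp
    have "(\<Sum>zs\<in>perms A. W A zs) = (\<Sum>z\<in>A. \<Sum>zs\<in>perms (A - {z}). q z A / m A * W (A - {z}) zs)"
      by (simp add: sum_perms_cons[OF False])
    also have "\<dots> = (\<Sum>z\<in>A. q z A / m A)"
    proof (rule sum.cong)
      fix z assume z: "z \<in> A"
      show "(\<Sum>zs\<in>perms (A - {z}). q z A / m A * W (A - {z}) zs) = q z A / m A"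
      proof (cases "q z A = 0")
        case True then show ?thesis by simp
      next
        case False
        then have "0 < q z A" using q_nn[OF z] by simp
        then have "A - {z} = {} \<or> 0 < m (A - {z})" using q_le_m_minus[OF z] by simp
        moreover have "card (A - {z}) < card A" by (rule card_Diff1_less[OF _ z]) simp
        ultimately have "(\<Sum>zs\<in>perms (A - {z}). W (A - {z}) zs) = 1" using less.hyps by blast
        moreover have "(\<Sum>zs\<in>perms (A - {z}). q z A / m A * W (A - {z}) zs) = q z A / m A * (\<Sum>zs\<in>perms (A - {z}). W (A - {z}) zs)"
          by (rule sum_distrib_left[symmetric])
        ultimately show ?thesis by simp
      qed
    qed simp
    also have "\<dots> = (\<Sum>z\<in>A. q z A) / m A" by (simp add: sum_divide_distrib)
    also have "\<dots> = 1" using mA False unfolding m_def by simp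
    finally show ?thesis .
  qed
qed

lemma L2:
  assumes "B \<noteq> {}"
  shows "(\<Sum>us\<in>perms (-B). W UNIV us) = m B"
  using assms
proof (induction "card (-B)" arbitrary: B rule: less_induct)
  case less
  show ?case
  proof (cases "-B = {}")
    case True
    then have "B = UNIV" by blast
    then show ?thesis using True by (simp add: perms_empty m_UNIV)
  next
    case False
    then have BU: "B \<noteq> UNIV" by auto
    have "(\<Sum>us\<in>perms (-B). W UNIV us) = (\<Sum>y\<in>-B. \<Sum>us\<in>perms (-B - {y}). W UNIV (us @ [y]))"
      by (rule sum_perms_snoc[OF False])
    also have "\<dots> = (\<Sum>y\<in>-B. q y (insert y B))"
    proof (rule sum.cong)
      fix y assume y: "y \<in> -B"
      have e: "-B - {y} = - insert y B" by blast
      have "(\<Sum>us\<in>perms (-B - {y}). W UNIV (us @ [y])) = (\<Sum>us\<in>perms (- insert y B). W UNIV us * (q y (insert y B) / m (insert y B)))"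
      proof (rule sum.cong)
        fix us assume "us \<in> perms (- insert y B)"
        then have "set us = - insert y B" unfolding perms_def by simp
        then have "UNIV - set us = insert y B" by blast
        then show "W UNIV (us @ [y]) = W UNIV us * (q y (insert y B) / m (insert y B))"
          by (simp add: W_append)
      qed (simp add: e)
      also have "\<dots> = (\<Sum>us\<in>perms (- insert y B). W UNIV us) * (q y (insert y B) / m (insert y B))"
        by (simp add: sum_distrib_right sum_divide_distrib)
      also have "(\<Sum>us\<in>perms (- insert y B). W UNIV us) = m (insert y B)"
      proof (rule less.hyps)
        have "- insert y B \<subset> -B" using y by blast
        then show "card (- insert y B) < card (- B)" by (simp add: psubset_card_mono)
      qed simp
      also have "m (insert y B) * (q y (insert y B) / m (insert y B)) = q y (insert y B)"
      proof (cases "m (insert y B) = 0")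
        case True
        then have "q y (insert y B) = 0" using q_le_m[of y "insert y B"] q_nn[of y "insert y B"] by simp
        then show ?thesis by simp
      qed simp
      finally show "(\<Sum>us\<in>perms (-B - {y}). W UNIV (us @ [y])) = q y (insert y B)" .
    qed simp
    also have "\<dots> = m B" by (rule flow[OF BU])
    finally show ?thesis .
  qed
qed

lemma takeWhile_split: "x \<notin> set us \<Longrightarrow> takeWhile (\<lambda>z. z \<noteq> x) (us @ x # vs) = us"
  by (induction us) auto

definition pre :: "'a \<Rightarrow> 'a list \<Rightarrow> 'a set" where
  "pre x ys = set (takeWhile (\<lambda>z. z \<noteq> x) ys)"

lemma L3_set:
  assumes x: "x \<in> B"
  shows "{ys\<in>perms UNIV. - pre x ys = B} = (\<lambda>(us, vs). us @ x # vs) ` (perms (-B) \<times> perms (B - {x}))"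
proof (intro equalityI subsetI)
  fix ys assume "ys \<in> {ys\<in>perms UNIV. - pre x ys = B}"
  then have d: "distinct ys" "set ys = UNIV" "- pre x ys = B" by (auto simp: perms_def)
  have "x \<in> set ys" using d(2) by simp
  then obtain us vs where ys: "ys = us @ x # vs" "x \<notin> set us" by (metis split_list_first)
  have tw: "takeWhile (\<lambda>z. z \<noteq> x) ys = us" using ys by (simp add: takeWhile_split)
  then have "set us = -B" using d(3) unfolding pre_def by auto
  moreover have "set vs = B - {x}"
  proof -
    have "set vs = UNIV - set us - {x}" using d ys by auto
    then show ?thesis using \<open>set us = -B\<close> by blast
  qed
  ultimately have "us \<in> perms (-B)" "vs \<in> perms (B - {x})" using d ys by (auto simp: perms_def)
  then show "ys \<in> (\<lambda>(us, vs). us @ x # vs) ` (perms (-B) \<times> perms (B - {x}))"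
    using ys by (intro image_eqI[of _ _ "(us, vs)"]) auto
next
  fix ys assume "ys \<in> (\<lambda>(us, vs). us @ x # vs) ` (perms (-B) \<times> perms (B - {x}))"
  then obtain us vs where ys: "ys = us @ x # vs" "us \<in> perms (-B)" "vs \<in> perms (B - {x})" by auto
  then have u: "distinct us" "set us = -B" and v: "distinct vs" "set vs = B - {x}" by (auto simp: perms_def)
  have "x \<notin> set us" using u x by simp
  then have "takeWhile (\<lambda>z. z \<noteq> x) ys = us" using ys by (simp add: takeWhile_split)
  then have "- pre x ys = B" using u unfolding pre_def by simp
  moreover have "distinct ys" using ys u v x by auto
  moreover have "set ys = UNIV" using ys u v x by auto
  ultimately show "ys \<in> {ys\<in>perms UNIV. - pre x ys = B}" by (simp add: perms_def)
qed

lemma L3: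
  assumes x: "x \<in> B"
  shows "(\<Sum>ys\<in>{ys\<in>perms UNIV. - pre x ys = B}. W UNIV ys) = q x B"
proof -
  have inj: "inj_on (\<lambda>(us, vs). us @ x # vs) (perms (-B) \<times> perms (B - {x}))"
  proof (rule inj_onI, clarify)
    fix us vs us' vs'
    assume a: "us \<in> perms (-B)" "vs \<in> perms (B - {x})" "us @ x # vs = us' @ x # vs'"
    then have "x \<notin> set us" "x \<notin> set vs" using x by (auto simp: perms_def)
    then show "us = us' \<and> vs = vs'" using a(3) append_Cons_eq_iff[of x us vs us' vs'] by simp
  qed
  have "(\<Sum>ys\<in>{ys\<in>perms UNIV. - pre x ys = B}. W UNIV ys)
      = (\<Sum>(us, vs)\<in>perms (-B) \<times> perms (B - {x}). W UNIV (us @ x # vs))"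
    unfolding L3_set[OF x] by (subst sum.reindex[OF inj]) (simp add: comp_def case_prod_unfold)
  also have "\<dots> = (\<Sum>(us, vs)\<in>perms (-B) \<times> perms (B - {x}). W UNIV us * (q x B / m B * W (B - {x}) vs))"
  proof (rule sum.cong, simp, clarify)
    fix us vs assume "us \<in> perms (-B)"
    then have "UNIV - set us = B" unfolding perms_def by auto
    then show "W UNIV (us @ x # vs) = W UNIV us * (q x B / m B * W (B - {x}) vs)"
      by (simp add: W_append)
  qed
  also have "\<dots> = (\<Sum>us\<in>perms (-B). W UNIV us) * (q x B / m B) * (\<Sum>vs\<in>perms (B - {x}). W (B - {x}) vs)"
    by (simp add: sum.cartesian_product[symmetric] sum_product mult_ac sum_distrib_left sum_divide_distrib)
  also have "\<dots> = q x B"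
  proof (cases "q x B = 0")
    case True then show ?thesis by simp
  next
    case False
    then have qp: "0 < q x B" using q_nn[OF x] by simp
    then have mB: "0 < m B" using q_le_m[OF x] by simp
    have "B - {x} = {} \<or> 0 < m (B - {x})" using qp q_le_m_minus[OF x] by simp
    then have "(\<Sum>vs\<in>perms (B - {x}). W (B - {x}) vs) = 1" by (rule L1)
    moreover have "(\<Sum>us\<in>perms (-B). W UNIV us) = m B" using x by (intro L2) blast
    ultimately show ?thesis using mB by simp
  qed
  finally show ?thesis .
qed

lemma f_perm_repr:
  assumes x: "x \<in> A"
  shows "f x A = (\<Sum>ys\<in>{ys\<in>perms UNIV. A \<inter> pre x ys = {}}. W UNIV ys)"
proof -
  have "f x A = (\<Sum>B\<in>{B. A \<subseteq> B}. q x B)" by (rule inversion)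
  also have "\<dots> = (\<Sum>B\<in>{B. A \<subseteq> B}. \<Sum>ys\<in>{ys\<in>perms UNIV. - pre x ys = B}. W UNIV ys)"
    by (rule sum.cong) (use x in \<open>auto intro!: L3[symmetric]\<close>)
  also have "\<dots> = (\<Sum>ys\<in>perms UNIV. \<Sum>B\<in>{B\<in>{B. A \<subseteq> B}. - pre x ys = B}. W UNIV ys)"
    by (rule sum.swap_restrict) (simp_all add: finite_perms)
  also have "\<dots> = (\<Sum>ys\<in>perms UNIV. if A \<inter> pre x ys = {} then W UNIV ys else 0)"
  proof (rule sum.cong)
    fix ys
    have "{B\<in>{B. A \<subseteq> B}. - pre x ys = B} = (if A \<inter> pre x ys = {} then {- pre x ys} else {})" by auto
    then show "(\<Sum>B\<in>{B\<in>{B. A \<subseteq> B}. - pre x ys = B}. W UNIV ys) = (if A \<inter> pre x ys = {} then W UNIV ys else 0)"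
      by simp
  qed simp
  also have "\<dots> = (\<Sum>ys\<in>{ys\<in>perms UNIV. A \<inter> pre x ys = {}}. W UNIV ys)"
    by (simp add: sum.inter_filter finite_perms)
  finally show ?thesis .
qed

end


definition rel_of :: "'a list \<Rightarrow> 'a rel" where
  "rel_of ys = {(a, b). \<exists>i j. i < j \<and> j < length ys \<and> ys ! i = a \<and> ys ! j = b}"

lemma rel_of_lorders:
  assumes d: "distinct ys" and s: "set ys = UNIV"
  shows "rel_of ys \<in> lorders"
proof -
  have tr: "trans (rel_of ys)"
  proof (rule transI)
    fix a b c assume "(a, b) \<in> rel_of ys" "(b, c) \<in> rel_of ys"
    then obtain i j k l where ij: "i < j" "j < length ys" "ys ! i = a" "ys ! j = b"
      and kl: "k < l" "l < length ys" "ys ! k = b" "ys ! l = c"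
      unfolding rel_of_def by blast
    have "j = k" using d ij kl nth_eq_iff_index_eq by fastforce
    then have "i < l" "l < length ys" "ys ! i = a" "ys ! l = c" using ij kl by auto
    then show "(a, c) \<in> rel_of ys" unfolding rel_of_def by blast
  qed
  have ir: "irrefl (rel_of ys)"
  proof (unfold irrefl_def, intro allI notI)
    fix a assume "(a, a) \<in> rel_of ys"
    then obtain i j where "i < j" "j < length ys" "ys ! i = a" "ys ! j = a"
      unfolding rel_of_def by blast
    then show False using d nth_eq_iff_index_eq by fastforce
  qed
  have to: "total (rel_of ys)"
  proof (unfold total_on_def, intro ballI impI)
    fix a b :: 'a assume ab: "a \<noteq> b"
    have "a \<in> set ys" "b \<in> set ys" using s by auto
    then obtain i j where ij: "i < length ys" "ys ! i = a" "j < length ys" "ys ! j = b"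
      by (metis in_set_conv_nth)
    then have "i \<noteq> j" using ab by blast
    show "(a, b) \<in> rel_of ys \<or> (b, a) \<in> rel_of ys"
    proof (cases "i < j")
      case True
      then have "(a, b) \<in> rel_of ys" unfolding rel_of_def using ij by blast
      then show ?thesis ..
    next
      case False
      then have "j < i" using \<open>i \<noteq> j\<close> by simp
      then have "(b, a) \<in> rel_of ys" unfolding rel_of_def using ij by blast
      then show ?thesis ..
    qed
  qed
  show ?thesis unfolding lorders_def strict_linear_order_on_def using tr ir to by simp
qed

lemma nth_split_Suc: "(us @ x # vs) ! Suc (length us + k) = vs ! k"
  by (simp add: nth_append)

lemma rel_of_split:
  assumes d: "distinct (us @ x # vs)"
  shows "(x, y) \<in> rel_of (us @ x # vs) \<longleftrightarrow> y \<in> set vs"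
proof
  let ?ys = "us @ x # vs"
  assume "(x, y) \<in> rel_of ?ys"
  then obtain i j where ij: "i < j" "j < length ?ys" "?ys ! i = x" "?ys ! j = y"
    unfolding rel_of_def by blast
  have lx: "?ys ! length us = x" by simp
  have "length us < length ?ys" by simp
  then have "i = length us" using nth_eq_iff_index_eq[OF d, of i "length us"] ij lx by simp
  then obtain k where k: "j = Suc (length us + k)" using ij(1) by (metis less_iff_Suc_add)
  then have "k < length vs" using ij(2) by simp
  moreover have "vs ! k = y" using ij(4) k nth_split_Suc by metis
  ultimately show "y \<in> set vs" by (metis nth_mem)
next
  let ?ys = "us @ x # vs"
  assume "y \<in> set vs"
  then obtain k where k: "k < length vs" "vs ! k = y" by (metis in_set_conv_nth)
  have "?ys ! Suc (length us + k) = vs ! k" by (rule nth_split_Suc)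
  then have "?ys ! Suc (length us + k) = y" using k(2) by simp
  moreover have "length us < Suc (length us + k)" "Suc (length us + k) < length ?ys"
    "?ys ! length us = x" using k by simp_all
  ultimately show "(x, y) \<in> rel_of ?ys" unfolding rel_of_def by blast
qed

context falm
begin

lemma rel_of_Nset:
  assumes d: "distinct ys" and s: "set ys = (UNIV :: 'a set)"
  shows "rel_of ys \<in> Nset x A \<longleftrightarrow> A \<inter> pre x ys = {}"
proof -
  have "x \<in> set ys" using s by simp
  then obtain us vs where ys: "ys = us @ x # vs" "x \<notin> set us" by (metis split_list_first)
  have p: "pre x ys = set us" unfolding pre_def ys using ys(2) by (simp add: takeWhile_split)
  have dd: "distinct (us @ x # vs)" using d ys by simp
  have "(\<forall>y\<in>A - {x}. (x, y) \<in> rel_of ys) \<longleftrightarrow> (\<forall>y\<in>A - {x}. y \<in> set vs)"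
    unfolding ys using rel_of_split[OF dd] by simp
  also have "\<dots> \<longleftrightarrow> A \<inter> set us = {}"
  proof -
    have "set vs \<inter> set us = {}" "x \<notin> set vs" using dd by auto
    moreover have "\<And>y. y \<in> set us \<or> y = x \<or> y \<in> set vs" using s ys by auto
    ultimately show ?thesis using ys(2) by blast
  qed
  finally show ?thesis unfolding Nset_def p using rel_of_lorders[OF d s] by simp
qed

definition nu :: "'a rel \<Rightarrow> real" where
  "nu r = (\<Sum>ys\<in>{ys\<in>perms UNIV. rel_of ys = r}. W UNIV ys)"

lemma nu_dist: "is_dist nu"
proof -
  have "rel_of ` perms UNIV \<subseteq> lorders"
    using rel_of_lorders unfolding perms_def by blast
  then have "(\<Sum>r\<in>lorders. nu r) = (\<Sum>ys\<in>perms UNIV. W UNIV ys)"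
    unfolding nu_def by (intro sum.group finite_perms finite_lorders)
  also have "\<dots> = 1" using m_UNIV by (intro L1) simp
  finally have "(\<Sum>r\<in>lorders. nu r) = 1" .
  moreover have "0 \<le> nu r" for r
    unfolding nu_def by (rule sum_nonneg) (auto simp: perms_def intro: W_nonneg)
  ultimately show ?thesis unfolding is_dist_def by simp
qed

lemma nu_repr:
  assumes x: "x \<in> A"
  shows "f x A = rum nu x A"
proof -
  have "rum nu x A = (\<Sum>r\<in>Nset x A. \<Sum>ys\<in>{ys\<in>{ys\<in>perms UNIV. rel_of ys \<in> Nset x A}. rel_of ys = r}. W UNIV ys)"
  proof -
    have "\<And>r. r \<in> Nset x A \<Longrightarrow> {ys\<in>{ys\<in>perms UNIV. rel_of ys \<in> Nset x A}. rel_of ys = r} = {ys\<in>perms UNIV. rel_of ys = r}"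
      by blast
    then show ?thesis unfolding rum_def nu_def by (intro sum.cong) simp_all
  qed
  also have "\<dots> = (\<Sum>ys\<in>{ys\<in>perms UNIV. rel_of ys \<in> Nset x A}. W UNIV ys)"
    by (rule sum.group) (auto simp: finite_perms finite_Nset)
  also have "{ys\<in>perms UNIV. rel_of ys \<in> Nset x A} = {ys\<in>perms UNIV. A \<inter> pre x ys = {}}"
    using rel_of_Nset unfolding perms_def by blast
  finally show ?thesis using f_perm_repr[OF x] by simp
qed

end

theorem falmagne:
  fixes f :: "'a::finite \<Rightarrow> 'a set \<Rightarrow> real"
  assumes "\<And>A. A \<noteq> {} \<Longrightarrow> (\<Sum>x\<in>A. f x A) = 1"
    and "\<And>x B. x \<in> B \<Longrightarrow> 0 \<le> mob1 (f x) B"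
  shows "\<exists>\<nu>. is_dist \<nu> \<and> (\<forall>x A. x \<in> A \<longrightarrow> f x A = rum \<nu> x A)"
proof -
  interpret falm f using assms by unfold_locales
  show ?thesis using nu_dist nu_repr by blast
qed


lemma finite_len: "finite {zs :: ('a::finite) list. length zs = k}"
proof -
  have "{zs :: 'a list. length zs = k} = {zs. set zs \<subseteq> UNIV \<and> length zs = k}" by simp
  then show ?thesis using finite_lists_length_eq[of "UNIV :: 'a set" k] by simp
qed

lemma len_Suc_eq: "{zs :: 'a list. length zs = Suc k} = (\<lambda>(y, zs). y # zs) ` (UNIV \<times> {zs. length zs = k})"
proof (intro equalityI subsetI)
  fix ws :: "'a list" assume "ws \<in> {zs. length zs = Suc k}"
  then obtain y zs where "ws = y # zs" "length zs = k" by (cases ws) auto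
  then show "ws \<in> (\<lambda>(y, zs). y # zs) ` (UNIV \<times> {zs. length zs = k})"
    by (intro image_eqI[of _ _ "(y, zs)"]) auto
qed auto

lemma sum_len_Suc:
  fixes h :: "('a::finite) list \<Rightarrow> real"
  shows "(\<Sum>zs\<in>{zs. length zs = Suc k}. h zs) = (\<Sum>y\<in>UNIV. \<Sum>zs\<in>{zs. length zs = k}. h (y # zs))"
proof -
  have inj: "inj_on (\<lambda>(y, zs). y # zs) (UNIV \<times> {zs :: 'a list. length zs = k})"
    by (auto simp: inj_on_def)
  show ?thesis
    unfolding len_Suc_eq by (subst sum.reindex[OF inj]) (simp add: sum.cartesian_product case_prod_unfold)
qed

lemma marg_expand:
  "marg k p xs As = (\<Sum>zs\<in>{zs. length zs = k}. p (xs @ zs) (As @ replicate k UNIV))"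
proof (induction k arbitrary: xs As)
  case 0 then show ?case by simp
next
  case (Suc k)
  have "marg (Suc k) p xs As = (\<Sum>y\<in>UNIV. \<Sum>zs\<in>{zs. length zs = k}. p ((xs @ [y]) @ zs) ((As @ [UNIV]) @ replicate k UNIV))"
    by (simp add: Suc.IH)
  also have "\<dots> = (\<Sum>y\<in>UNIV. \<Sum>zs\<in>{zs. length zs = k}. p (xs @ y # zs) (As @ replicate (Suc k) UNIV))"
    by simp
  also have "\<dots> = (\<Sum>zs\<in>{zs. length zs = Suc k}. p (xs @ zs) (As @ replicate (Suc k) UNIV))"
    by (rule sum_len_Suc[symmetric])
  finally show ?case .
qed

lemma in_menus_length: "in_menus xs As \<Longrightarrow> length xs = length As"
  unfolding in_menus_def by (rule list_all2_lengthD)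

lemma in_menus_append:
  "length xs = length As \<Longrightarrow> in_menus (xs @ ys) (As @ Bs) \<longleftrightarrow> in_menus xs As \<and> in_menus ys Bs"
  unfolding in_menus_def by (rule list_all2_append)

lemma in_menus_rep: "length zs = k \<Longrightarrow> in_menus zs (replicate k UNIV)"
  unfolding in_menus_def by (simp add: list_all2_conv_all_nth)

lemma in_menus_single: "in_menus [y] [B] \<longleftrightarrow> y \<in> B"
  unfolding in_menus_def by simp

lemma menus_append: "As \<in> menus n \<Longrightarrow> Bs \<in> menus k \<Longrightarrow> As @ Bs \<in> menus (n + k)"
  unfolding menus_def by auto

lemma menus_rep: "replicate k UNIV \<in> menus k"
  unfolding menus_def by simp

lemma menus_single: "B \<noteq> {} \<Longrightarrow> [B] \<in> menus 1"
  unfolding menus_def by simp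

lemma pp_expand:
  "length xs \<le> T \<Longrightarrow> pp T p xs As = (\<Sum>zs\<in>{zs. length zs = T - length xs}. p (xs @ zs) (As @ replicate (T - length xs) UNIV))"
  unfolding pp_def by (rule marg_expand)

lemma pp_nonneg:
  fixes p :: "('a::finite) list \<Rightarrow> 'a set list \<Rightarrow> real"
  assumes rj: "rjcr T p" and As: "As \<in> menus n" and n: "n \<le> T" and xs: "in_menus xs As"
  shows "0 \<le> pp T p xs As"
proof -
  have l: "length xs = n" using in_menus_length[OF xs] As by (simp add: menus_def)
  have "length xs \<le> T" using l n by simp
  show ?thesis unfolding pp_expand[OF \<open>length xs \<le> T\<close>]
  proof (rule sum_nonneg)
    fix zs :: "'a list" assume "zs \<in> {zs. length zs = T - length xs}"
    then have zs: "length zs = T - length xs" by simp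
    have "As @ replicate (T - length xs) UNIV \<in> menus T"
      using menus_append[OF As menus_rep[of "T - n"]] l n by simp
    moreover have "xs @ zs \<in> sels (As @ replicate (T - length xs) UNIV)"
      unfolding sels_def using in_menus_append[of xs As] l As xs in_menus_rep[OF zs]
      by (simp add: menus_def)
    ultimately show "0 \<le> p (xs @ zs) (As @ replicate (T - length xs) UNIV)"
      using rj unfolding rjcr_def by blast
  qed
qed

lemma pp_step:
  assumes "length xs < T"
  shows "pp T p xs As = (\<Sum>y\<in>UNIV. pp T p (xs @ [y]) (As @ [UNIV]))"
proof -
  have "T - length xs = Suc (T - length (xs @ [y]))" for y using assms by simp
  then show ?thesis unfolding pp_def by simp
qed


lemma supsets_lists_in: "supsets Es = lists_in (length Es) (\<lambda>i. {A. Es ! i \<subseteq> A})"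
  unfolding supsets_def lists_in_def by auto

lemma finite_supsets: "finite (supsets (Es :: ('a::finite) set list))"
  unfolding supsets_lists_in by (rule finite_lists_in) simp

lemma supsets_trans: "Cs \<in> supsets Es \<Longrightarrow> Ds \<in> supsets Cs \<Longrightarrow> Ds \<in> supsets Es"
  unfolding supsets_def by auto

lemma supsets_refl: "Es \<in> supsets Es"
  unfolding supsets_def by auto

lemma mobius_inversion:
  fixes p :: "('a::finite) list \<Rightarrow> 'a set list \<Rightarrow> real"
  shows "p xs Es = (\<Sum>Cs\<in>supsets Es. mobius p xs Cs)"
proof -
  let ?n = "length Es"
  let ?e = "\<lambda>Cs Ds. (-1::real) ^ (\<Sum>i<?n. card (Ds ! i - Cs ! i))"
  have "(\<Sum>Cs\<in>supsets Es. mobius p xs Cs) = (\<Sum>Cs\<in>supsets Es. \<Sum>Ds\<in>{Ds\<in>supsets Es. Ds \<in> supsets Cs}. ?e Cs Ds * p xs Ds)"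
  proof (rule sum.cong)
    fix Cs assume Cs: "Cs \<in> supsets Es"
    then have l: "length Cs = ?n" by (simp add: supsets_def)
    have "{Ds\<in>supsets Es. Ds \<in> supsets Cs} = supsets Cs" using Cs supsets_trans by blast
    then show "mobius p xs Cs = (\<Sum>Ds\<in>{Ds\<in>supsets Es. Ds \<in> supsets Cs}. ?e Cs Ds * p xs Ds)"
      unfolding mobius_def l by simp
  qed simp
  also have "\<dots> = (\<Sum>Ds\<in>supsets Es. \<Sum>Cs\<in>{Cs\<in>supsets Es. Ds \<in> supsets Cs}. ?e Cs Ds * p xs Ds)"
    by (rule sum.swap_restrict) (simp_all add: finite_supsets)
  also have "\<dots> = (\<Sum>Ds\<in>supsets Es. (if Ds = Es then 1 else 0) * p xs Ds)"
  proof (rule sum.cong)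
    fix Ds assume Ds: "Ds \<in> supsets Es"
    then have lD: "length Ds = ?n" and sub: "\<And>i. i < ?n \<Longrightarrow> Es ! i \<subseteq> Ds ! i" by (simp_all add: supsets_def)
    have set_eq: "{Cs\<in>supsets Es. Ds \<in> supsets Cs} = lists_in ?n (\<lambda>i. {C. Es ! i \<subseteq> C \<and> C \<subseteq> Ds ! i})"
    proof (rule set_eqI)
      fix Cs
      show "Cs \<in> {Cs\<in>supsets Es. Ds \<in> supsets Cs} \<longleftrightarrow> Cs \<in> lists_in ?n (\<lambda>i. {C. Es ! i \<subseteq> C \<and> C \<subseteq> Ds ! i})"
      proof
        assume "Cs \<in> {Cs\<in>supsets Es. Ds \<in> supsets Cs}"
        then have a: "length Cs = ?n" "\<forall>i<?n. Es ! i \<subseteq> Cs ! i" "\<forall>i<length Cs. Cs ! i \<subseteq> Ds ! i"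
          unfolding supsets_def by simp_all
        show "Cs \<in> lists_in ?n (\<lambda>i. {C. Es ! i \<subseteq> C \<and> C \<subseteq> Ds ! i})"
          unfolding lists_in_def using a by simp
      next
        assume "Cs \<in> lists_in ?n (\<lambda>i. {C. Es ! i \<subseteq> C \<and> C \<subseteq> Ds ! i})"
        then have a: "length Cs = ?n" "\<forall>i<?n. Es ! i \<subseteq> Cs ! i \<and> Cs ! i \<subseteq> Ds ! i"
          unfolding lists_in_def by simp_all
        show "Cs \<in> {Cs\<in>supsets Es. Ds \<in> supsets Cs}"
          unfolding supsets_def using a lD by simp
      qed
    qed
    have "(\<Sum>Cs\<in>{Cs\<in>supsets Es. Ds \<in> supsets Cs}. ?e Cs Ds)
        = (\<Sum>Cs\<in>lists_in ?n (\<lambda>i. {C. Es ! i \<subseteq> C \<and> C \<subseteq> Ds ! i}). \<Prod>i<?n. (-1::real) ^ card (Ds ! i - Cs ! i))"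
      unfolding set_eq by (simp add: power_sum)
    also have "\<dots> = (\<Prod>i<?n. \<Sum>C\<in>{C. Es ! i \<subseteq> C \<and> C \<subseteq> Ds ! i}. (-1::real) ^ card (Ds ! i - C))"
      by (rule sum_prod_lists_in) simp
    also have "\<dots> = (\<Prod>i<?n. if Ds ! i = Es ! i then 1 else 0)"
      by (rule prod.cong) (simp_all add: alt_interval_down sub)
    also have "\<dots> = (if Ds = Es then 1 else 0)"
    proof (cases "Ds = Es")
      case True then show ?thesis by simp
    next
      case False
      then have "\<not> (\<forall>i<?n. Ds ! i = Es ! i)" using lD list_eq_iff_nth_eq[of Ds Es] by simp
      then obtain i where i: "i < ?n" "Ds ! i \<noteq> Es ! i" by blast
      have "(\<Prod>i<?n. if Ds ! i = Es ! i then 1 else 0) = (0::real)"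
        by (rule prod_zero) (use i in auto)
      then show ?thesis using False by simp
    qed
    finally have "(\<Sum>Cs\<in>{Cs\<in>supsets Es. Ds \<in> supsets Cs}. ?e Cs Ds) = (if Ds = Es then 1 else 0)" .
    then show "(\<Sum>Cs\<in>{Cs\<in>supsets Es. Ds \<in> supsets Cs}. ?e Cs Ds * p xs Ds) = (if Ds = Es then 1 else 0) * p xs Ds"
      by (simp add: sum_distrib_right[symmetric])
  qed simp
  also have "\<dots> = p xs Es"
  proof -
    have "\<And>Ds. (if Ds = Es then 1 else 0) * p xs Ds = (if Ds = Es then p xs Ds else 0)" by simp
    then show ?thesis by (simp add: sum.delta finite_supsets supsets_refl)
  qed
  finally show ?thesis by simp
qed


lemma nth_mid: "(As @ X # R) ! length As = X"
  by simp

lemma nth_mid_other: "i \<noteq> length As \<Longrightarrow> (As @ X # R) ! i = (As @ Y # R) ! i"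
  by (simp add: nth_append nth_Cons split: nat.split)

lemma supsets_mid:
  assumes "B \<subseteq> B'"
  shows "supsets (As @ B' # R) = {Cs\<in>supsets (As @ B # R). B' \<subseteq> Cs ! length As}"
proof (rule set_eqI)
  fix Cs
  let ?E = "As @ B # R" and ?E' = "As @ B' # R"
  have len: "length ?E' = length ?E" by simp
  have "(\<forall>i<length ?E'. ?E' ! i \<subseteq> Cs ! i) \<longleftrightarrow> (\<forall>i<length ?E. ?E ! i \<subseteq> Cs ! i) \<and> B' \<subseteq> Cs ! length As"
  proof
    assume a: "\<forall>i<length ?E'. ?E' ! i \<subseteq> Cs ! i"
    have b: "B' \<subseteq> Cs ! length As" using a[rule_format, of "length As"] by simp
    have "?E ! i \<subseteq> Cs ! i" if "i < length ?E" for i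
    proof (cases "i = length As")
      case True then show ?thesis using b assms by simp
    next
      case False then show ?thesis using a[rule_format, of i] that nth_mid_other[OF False, of B R B'] by simp
    qed
    then show "(\<forall>i<length ?E. ?E ! i \<subseteq> Cs ! i) \<and> B' \<subseteq> Cs ! length As" using b by simp
  next
    assume a: "(\<forall>i<length ?E. ?E ! i \<subseteq> Cs ! i) \<and> B' \<subseteq> Cs ! length As"
    have "?E' ! i \<subseteq> Cs ! i" if "i < length ?E'" for i
    proof (cases "i = length As")
      case True then show ?thesis using a by simp
    next
      case False then show ?thesis using a that nth_mid_other[OF False, of B' R B] by simp
    qed
    then show "\<forall>i<length ?E'. ?E' ! i \<subseteq> Cs ! i" by simp
  qed
  then show "Cs \<in> supsets ?E' \<longleftrightarrow> Cs \<in> {Cs\<in>supsets ?E. B' \<subseteq> Cs ! length As}"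
    unfolding supsets_def using len by simp
qed

lemma supsets_menus:
  assumes w: "in_menus w Es" and Cs: "Cs \<in> supsets Es"
  shows "Cs \<in> menus (length Es)" "in_menus w Cs"
proof -
  have lw: "length w = length Es" and wi: "\<And>i. i < length Es \<Longrightarrow> w ! i \<in> Es ! i"
    using w unfolding in_menus_def by (simp_all add: list_all2_conv_all_nth)
  have lC: "length Cs = length Es" and sub: "\<And>i. i < length Es \<Longrightarrow> Es ! i \<subseteq> Cs ! i"
    using Cs unfolding supsets_def by simp_all
  have wC: "w ! i \<in> Cs ! i" if "i < length Cs" for i
  proof -
    have "i < length Es" using that lC by simp
    then show ?thesis using wi[of i] sub[of i] by (rule_tac subsetD) simp_all
  qed
  then show "in_menus w Cs" unfolding in_menus_def using lw lC by (simp add: list_all2_conv_all_nth)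
  have "A \<noteq> {}" if "A \<in> set Cs" for A
  proof -
    from that have "\<exists>i<length Cs. Cs ! i = A" by (simp only: in_set_conv_nth)
    then obtain i where i: "i < length Cs" "Cs ! i = A" by blast
    have "w ! i \<in> A" using wC[OF i(1)] i(2) by simp
    then show ?thesis by (rule_tac ex_in_conv[THEN iffD1]) (rule exI)
  qed
  then show "Cs \<in> menus (length Es)" unfolding menus_def using lC by simp
qed

lemma mob_mid_nonneg:
  fixes p :: "('a::finite) list \<Rightarrow> 'a set list \<Rightarrow> real"
  assumes CM: "complete_monotonicity T p" and w: "in_menus w (As @ B # R)" and lT: "length (As @ B # R) = T"
  shows "0 \<le> (\<Sum>B'\<in>{B'. B \<subseteq> B'}. (-1::real) ^ card (B' - B) * p w (As @ B' # R))"
proof -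
  let ?E = "\<lambda>X. As @ X # R"
  let ?\<mu> = "mobius p w"
  have "(\<Sum>B'\<in>{B'. B \<subseteq> B'}. (-1::real) ^ card (B' - B) * p w (?E B'))
      = (\<Sum>B'\<in>{B'. B \<subseteq> B'}. \<Sum>Cs\<in>{Cs\<in>supsets (?E B). B' \<subseteq> Cs ! length As}. (-1::real) ^ card (B' - B) * ?\<mu> Cs)"
  proof (rule sum.cong)
    fix B' assume "B' \<in> {B'. B \<subseteq> B'}"
    then have "B \<subseteq> B'" by simp
    then show "(-1::real) ^ card (B' - B) * p w (?E B') = (\<Sum>Cs\<in>{Cs\<in>supsets (?E B). B' \<subseteq> Cs ! length As}. (-1::real) ^ card (B' - B) * ?\<mu> Cs)"
      unfolding mobius_inversion[of p w "?E B'"] supsets_mid[OF \<open>B \<subseteq> B'\<close>, of As R]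
      by (simp add: sum_distrib_left)
  qed simp
  also have "\<dots> = (\<Sum>Cs\<in>supsets (?E B). \<Sum>B'\<in>{B'\<in>{B'. B \<subseteq> B'}. B' \<subseteq> Cs ! length As}. (-1::real) ^ card (B' - B) * ?\<mu> Cs)"
    by (rule sum.swap_restrict) (simp_all add: finite_supsets)
  also have "\<dots> \<ge> 0"
  proof (rule sum_nonneg)
    fix Cs assume Cs: "Cs \<in> supsets (?E B)"
    have "\<forall>i<length (?E B). ?E B ! i \<subseteq> Cs ! i" using Cs unfolding supsets_def by simp
    moreover have "length As < length (?E B)" by simp
    ultimately have "?E B ! length As \<subseteq> Cs ! length As" by blast
    then have "B \<subseteq> Cs ! length As" by (simp only: nth_mid)
    moreover have "{B'\<in>{B'. B \<subseteq> B'}. B' \<subseteq> Cs ! length As} = {B'. B \<subseteq> B' \<and> B' \<subseteq> Cs ! length As}" by blast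
    ultimately have s: "(\<Sum>B'\<in>{B'\<in>{B'. B \<subseteq> B'}. B' \<subseteq> Cs ! length As}. (-1::real) ^ card (B' - B)) \<ge> 0"
      by (simp add: alt_interval)
    have "Cs \<in> menus T" "in_menus w Cs" using supsets_menus[OF w Cs] lT by simp_all
    then have "0 \<le> ?\<mu> Cs" using CM unfolding complete_monotonicity_def sels_def by blast
    then show "0 \<le> (\<Sum>B'\<in>{B'\<in>{B'. B \<subseteq> B'}. B' \<subseteq> Cs ! length As}. (-1::real) ^ card (B' - B) * ?\<mu> Cs)"
      using s by (simp add: sum_distrib_right[symmetric])
  qed
  finally show ?thesis .
qed


lemma pp_mob_nonneg:
  fixes p :: "('a::finite) list \<Rightarrow> 'a set list \<Rightarrow> real"
  assumes CM: "complete_monotonicity T p" and As: "As \<in> menus n" and n: "n < T"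
    and xs: "in_menus xs As" and y: "y \<in> B"
  shows "0 \<le> mob1 (\<lambda>B'. pp T p (xs @ [y]) (As @ [B'])) B"
proof -
  define k where "k = T - Suc n"
  define R where "R = replicate k (UNIV :: 'a set)"
  have lA: "length As = n" using As by (simp add: menus_def)
  have lx: "length xs = n" using in_menus_length[OF xs] lA by simp
  have le: "length (xs @ [y]) \<le> T" using lx n by simp
  have kk: "T - length (xs @ [y]) = k" using lx unfolding k_def by simp
  have e: "pp T p (xs @ [y]) (As @ [B']) = (\<Sum>zs\<in>{zs. length zs = k}. p (xs @ y # zs) (As @ B' # R))" for B'
    unfolding pp_expand[OF le] kk R_def by simp
  have "mob1 (\<lambda>B'. pp T p (xs @ [y]) (As @ [B'])) B
      = (\<Sum>B'\<in>{B'. B \<subseteq> B'}. \<Sum>zs\<in>{zs. length zs = k}. (-1::real) ^ card (B' - B) * p (xs @ y # zs) (As @ B' # R))"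
    unfolding mob1_def e by (simp add: sum_distrib_left)
  also have "\<dots> = (\<Sum>zs\<in>{zs. length zs = k}. \<Sum>B'\<in>{B'. B \<subseteq> B'}. (-1::real) ^ card (B' - B) * p (xs @ y # zs) (As @ B' # R))"
    by (rule sum.swap)
  also have "\<dots> \<ge> 0"
  proof (rule sum_nonneg)
    fix zs :: "'a list" assume "zs \<in> {zs. length zs = k}"
    then have zs: "length zs = k" by simp
    have "in_menus (y # zs) (B # R)"
      using y in_menus_rep[OF zs] unfolding R_def in_menus_def by simp
    then have w: "in_menus (xs @ y # zs) (As @ B # R)"
      using in_menus_append[of xs As "y # zs" "B # R"] lx lA xs by simp
    have lT: "length (As @ B # R) = T" using lA n unfolding R_def k_def by simp
    show "0 \<le> (\<Sum>B'\<in>{B'. B \<subseteq> B'}. (-1::real) ^ card (B' - B) * p (xs @ y # zs) (As @ B' # R))"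
      by (rule mob_mid_nonneg[OF CM w lT])
  qed
  finally show ?thesis .
qed

lemma sels_cons_rep:
  "sels (A # replicate k UNIV) = (\<lambda>(x, zs). x # zs) ` (A \<times> {zs. length zs = k})"
proof (rule set_eqI)
  fix ws
  show "ws \<in> sels (A # replicate k UNIV) \<longleftrightarrow> ws \<in> (\<lambda>(x, zs). x # zs) ` (A \<times> {zs. length zs = k})"
  proof
    assume "ws \<in> sels (A # replicate k UNIV)"
    then have a: "list_all2 (\<in>) ws (A # replicate k UNIV)" unfolding sels_def in_menus_def by simp
    then obtain x zs where ws: "ws = x # zs" by (cases ws) auto
    then have "x \<in> A" "list_all2 (\<in>) zs (replicate k UNIV)" using a by simp_all
    then have "x \<in> A" "length zs = k" by (auto dest: list_all2_lengthD)
    then show "ws \<in> (\<lambda>(x, zs). x # zs) ` (A \<times> {zs. length zs = k})"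
      using ws by (intro image_eqI[of _ _ "(x, zs)"]) auto
  next
    assume "ws \<in> (\<lambda>(x, zs). x # zs) ` (A \<times> {zs. length zs = k})"
    then obtain x zs where "ws = x # zs" "x \<in> A" "length zs = k" by auto
    then show "ws \<in> sels (A # replicate k UNIV)"
      unfolding sels_def using in_menus_rep[of zs k] unfolding in_menus_def by simp
  qed
qed

lemma rho1_sum:
  fixes p :: "('a::finite) list \<Rightarrow> 'a set list \<Rightarrow> real"
  assumes rj: "rjcr T p" and T: "1 \<le> T" and A: "A \<noteq> {}"
  shows "(\<Sum>x\<in>A. pp T p [x] [A]) = 1"
proof -
  define k where "k = T - 1"
  have le: "length [x] \<le> T" for x :: 'a using T by simp
  have "(\<Sum>x\<in>A. pp T p [x] [A]) = (\<Sum>x\<in>A. \<Sum>zs\<in>{zs. length zs = k}. p (x # zs) (A # replicate k UNIV))"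
    unfolding pp_expand[OF le] k_def by simp
  also have "\<dots> = (\<Sum>(x, zs)\<in>A \<times> {zs. length zs = k}. p (x # zs) (A # replicate k UNIV))"
    by (simp add: sum.cartesian_product)
  also have "\<dots> = (\<Sum>ws\<in>sels (A # replicate k UNIV). p ws (A # replicate k UNIV))"
  proof -
    have inj: "inj_on (\<lambda>(x, zs). x # zs) (A \<times> {zs :: 'a list. length zs = k})"
      by (auto simp: inj_on_def)
    show ?thesis unfolding sels_cons_rep
      by (subst sum.reindex[OF inj]) (simp add: case_prod_unfold)
  qed
  also have "\<dots> = 1"
  proof -
    have "A # replicate k UNIV \<in> menus T" using A T unfolding menus_def k_def by auto
    then show ?thesis using rj unfolding rjcr_def by blast
  qed
  finally show ?thesis .
qed

lemma marg_cons:
  fixes p :: "('a::finite) list \<Rightarrow> 'a set list \<Rightarrow> real"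
  assumes M: "marginality T p" and n: "n \<in> {1..T-1}" and As: "As \<in> menus n"
    and xs: "in_menus xs As" and B: "B \<noteq> {}"
  shows "(\<Sum>y\<in>B. pp T p (xs @ [y]) (As @ [B])) = pp T p xs As"
proof -
  have "(\<Sum>y\<in>B. pp T p (xs @ [y]) (As @ [B])) = (\<Sum>y\<in>UNIV. pp T p (xs @ [y]) (As @ [UNIV]))"
    using M n As xs B unfolding marginality_def sels_def by blast
  also have "\<dots> = pp T p xs As"
  proof -
    have "length xs = n" using in_menus_length[OF xs] As by (simp add: menus_def)
    moreover have "n < T" using n by auto
    ultimately have "length xs < T" by simp
    then show ?thesis by (simp add: pp_step)
  qed
  finally show ?thesis .
qed

definition DD :: "('a rel \<Rightarrow> real) \<Rightarrow> (nat \<Rightarrow> 'a list \<Rightarrow> 'a rel \<Rightarrow> real) \<Rightarrow> nat \<Rightarrow> 'a list \<Rightarrow> 'a rel \<Rightarrow> real" where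
  "DD \<nu> t i ys = (if i = 0 then \<nu> else t i ys)"

definition GG :: "('a rel \<Rightarrow> real) \<Rightarrow> (nat \<Rightarrow> 'a list \<Rightarrow> 'a rel \<Rightarrow> real) \<Rightarrow> 'a list \<Rightarrow> 'a set list \<Rightarrow> real" where
  "GG \<nu> t xs As = (\<Prod>i<length xs. rum (DD \<nu> t i (take i xs)) (xs ! i) (As ! i))"

lemma GG_snoc:
  assumes "length As = length xs"
  shows "GG \<nu> t (xs @ [y]) (As @ [B]) = GG \<nu> t xs As * rum (DD \<nu> t (length xs) xs) y B"
proof -
  have "GG \<nu> t (xs @ [y]) (As @ [B])
      = (\<Prod>i<length xs. rum (DD \<nu> t i (take i (xs @ [y]))) ((xs @ [y]) ! i) ((As @ [B]) ! i))
        * rum (DD \<nu> t (length xs) xs) y B"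
    unfolding GG_def using assms by (simp add: nth_append)
  also have "(\<Prod>i<length xs. rum (DD \<nu> t i (take i (xs @ [y]))) ((xs @ [y]) ! i) ((As @ [B]) ! i))
      = GG \<nu> t xs As"
    unfolding GG_def using assms by (intro prod.cong) (simp_all add: nth_append)
  finally show ?thesis .
qed

lemma sicdru_formula:
  fixes \<nu> :: "('a::finite) rel \<Rightarrow> real"
  assumes T: "1 \<le> T" and lx: "length xs = T"
  shows "(\<Sum>rs\<in>{rs. length rs = T \<and> (\<forall>i<T. rs ! i \<in> Nset (xs ! i) (As ! i))}.
            \<nu> (rs ! 0) * (\<Prod>i\<in>{1..<T}. t i (take i xs) (rs ! i))) = GG \<nu> t xs As"
proof -
  have S: "{rs. length rs = T \<and> (\<forall>i<T. rs ! i \<in> Nset (xs ! i) (As ! i))} = lists_in T (\<lambda>i. Nset (xs ! i) (As ! i))"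
    unfolding lists_in_def by simp
  have U: "{..<T} = insert 0 {1..<T}" using T by auto
  have "\<nu> (rs ! 0) * (\<Prod>i\<in>{1..<T}. t i (take i xs) (rs ! i)) = (\<Prod>i<T. DD \<nu> t i (take i xs) (rs ! i))" for rs
  proof -
    have "(\<Prod>i<T. DD \<nu> t i (take i xs) (rs ! i)) = DD \<nu> t 0 (take 0 xs) (rs ! 0) * (\<Prod>i\<in>{1..<T}. DD \<nu> t i (take i xs) (rs ! i))"
      unfolding U by (subst prod.insert) simp_all
    also have "(\<Prod>i\<in>{1..<T}. DD \<nu> t i (take i xs) (rs ! i)) = (\<Prod>i\<in>{1..<T}. t i (take i xs) (rs ! i))"
      by (rule prod.cong) (simp_all add: DD_def)
    finally show ?thesis by (simp add: DD_def)
  qed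
  then have "(\<Sum>rs\<in>{rs. length rs = T \<and> (\<forall>i<T. rs ! i \<in> Nset (xs ! i) (As ! i))}.
            \<nu> (rs ! 0) * (\<Prod>i\<in>{1..<T}. t i (take i xs) (rs ! i)))
      = (\<Sum>rs\<in>lists_in T (\<lambda>i. Nset (xs ! i) (As ! i)). \<Prod>i<T. DD \<nu> t i (take i xs) (rs ! i))"
    unfolding S by simp
  also have "\<dots> = (\<Prod>i<T. \<Sum>r\<in>Nset (xs ! i) (As ! i). DD \<nu> t i (take i xs) r)"
    by (rule sum_prod_lists_in) (simp add: finite_Nset)
  also have "\<dots> = GG \<nu> t xs As"
    unfolding GG_def rum_def lx by simp
  finally show ?thesis .
qed


lemma DD_dist:
  assumes "is_dist \<nu>" "\<forall>n\<in>{1..T-1}. \<forall>xs. length xs = n \<longrightarrow> is_dist (t n xs)"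
    and "n < T" "length ys = n"
  shows "is_dist (DD \<nu> t n ys)"
proof (cases "n = 0")
  case True then show ?thesis using assms(1) by (simp add: DD_def)
next
  case False
  then have "n \<in> {1..T-1}" using assms(3) by auto
  then show ?thesis using assms(2,4) False by (simp add: DD_def)
qed

lemma menus_snoc: "As \<in> menus n \<Longrightarrow> B \<noteq> {} \<Longrightarrow> As @ [B] \<in> menus (Suc n)"
  unfolding menus_def by auto

lemma in_menus_snoc: "in_menus xs As \<Longrightarrow> y \<in> B \<Longrightarrow> in_menus (xs @ [y]) (As @ [B])"
  unfolding in_menus_def by (simp add: list_all2_appendI)

lemma nec_pp:
  fixes p :: "('a::finite) list \<Rightarrow> 'a set list \<Rightarrow> real"
  assumes nu: "is_dist \<nu>" and tt: "\<forall>n\<in>{1..T-1}. \<forall>xs. length xs = n \<longrightarrow> is_dist (t n xs)"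
    and repr: "\<And>As xs. As \<in> menus T \<Longrightarrow> in_menus xs As \<Longrightarrow> p xs As = GG \<nu> t xs As"
  shows "length xs + k = T \<Longrightarrow> As \<in> menus (length xs) \<Longrightarrow> in_menus xs As \<Longrightarrow> marg k p xs As = GG \<nu> t xs As"
proof (induction k arbitrary: xs As)
  case 0
  then show ?case using repr by simp
next
  case (Suc k)
  have lA: "length As = length xs" using Suc.prems(2) by (simp add: menus_def)
  have "marg (Suc k) p xs As = (\<Sum>y\<in>UNIV. marg k p (xs @ [y]) (As @ [UNIV]))" by simp
  also have "\<dots> = (\<Sum>y\<in>UNIV. GG \<nu> t (xs @ [y]) (As @ [UNIV]))"
  proof (rule sum.cong)
    fix y :: 'a
    have "As @ [UNIV] \<in> menus (length (xs @ [y]))" using menus_snoc[OF Suc.prems(2)] by simp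
    moreover have "in_menus (xs @ [y]) (As @ [UNIV])" using in_menus_snoc[OF Suc.prems(3)] by simp
    moreover have "length (xs @ [y]) + k = T" using Suc.prems(1) by simp
    ultimately show "marg k p (xs @ [y]) (As @ [UNIV]) = GG \<nu> t (xs @ [y]) (As @ [UNIV])"
      using Suc.IH by blast
  qed simp
  also have "\<dots> = GG \<nu> t xs As * (\<Sum>y\<in>UNIV. rum (DD \<nu> t (length xs) xs) y UNIV)"
    by (simp add: GG_snoc[OF lA] sum_distrib_left)
  also have "(\<Sum>y\<in>UNIV. rum (DD \<nu> t (length xs) xs) y UNIV) = 1"
  proof (rule rum_sum)
    show "is_dist (DD \<nu> t (length xs) xs)"
      by (rule DD_dist[OF nu tt]) (use Suc.prems(1) in simp_all)
  qed simp
  finally show ?case by simp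
qed

lemma nec_pp':
  fixes p :: "('a::finite) list \<Rightarrow> 'a set list \<Rightarrow> real"
  assumes nu: "is_dist \<nu>" and tt: "\<forall>n\<in>{1..T-1}. \<forall>xs. length xs = n \<longrightarrow> is_dist (t n xs)"
    and repr: "\<And>As xs. As \<in> menus T \<Longrightarrow> in_menus xs As \<Longrightarrow> p xs As = GG \<nu> t xs As"
    and As: "As \<in> menus n" and n: "n \<le> T" and xs: "in_menus xs As"
  shows "pp T p xs As = GG \<nu> t xs As"
proof -
  have l: "length xs = n" using in_menus_length[OF xs] As by (simp add: menus_def)
  show ?thesis unfolding pp_def
    by (rule nec_pp[OF nu tt repr]) (use l n As xs in simp_all)
qed

lemma necessity:
  fixes p :: "('a::finite) list \<Rightarrow> 'a set list \<Rightarrow> real"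
  assumes T: "1 \<le> T" and S: "sicdru T p"
  shows "marginality T p \<and> complete_monotonicity T p \<and> choice_set_independence T p"
proof -
  obtain \<nu> t where nu: "is_dist \<nu>" and tt: "\<forall>n\<in>{1..T-1}. \<forall>xs. length xs = n \<longrightarrow> is_dist (t n xs)"
    and rep0: "\<forall>As\<in>menus T. \<forall>xs\<in>sels As.
        p xs As = (\<Sum>rs\<in>{rs. length rs = T \<and> (\<forall>i<T. rs ! i \<in> Nset (xs ! i) (As ! i))}.
                     \<nu> (rs ! 0) * (\<Prod>i\<in>{1..<T}. t i (take i xs) (rs ! i)))"
    using S unfolding sicdru_def by blast
  have repr: "p xs As = GG \<nu> t xs As" if "As \<in> menus T" "in_menus xs As" for As xs
  proof -
    have "length xs = T" using in_menus_length[OF that(2)] that(1) by (simp add: menus_def)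
    then show ?thesis using rep0 that sicdru_formula[OF T, of xs \<nu> t As] unfolding sels_def by simp
  qed
  have ppG: "pp T p xs As = GG \<nu> t xs As" if "As \<in> menus n" "n \<le> T" "in_menus xs As" for As n xs
    by (rule nec_pp'[OF nu tt _ that], rule repr, assumption+)
  have step: "pp T p (xs @ [y]) (As @ [B]) = GG \<nu> t xs As * rum (DD \<nu> t n xs) y B"
    if "n \<in> {1..T-1}" "As \<in> menus n" "in_menus xs As" "y \<in> B" for n As xs y B
  proof -
    have lx: "length xs = n" and lA: "length As = length xs"
      using in_menus_length[OF that(3)] that(2) by (simp_all add: menus_def)
    have "B \<noteq> {}" using that(4) by blast
    have "Suc n \<le> T" using that(1) by auto
    then have "pp T p (xs @ [y]) (As @ [B]) = GG \<nu> t (xs @ [y]) (As @ [B])"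
      using ppG[OF menus_snoc[OF that(2) \<open>B \<noteq> {}\<close>] _ in_menus_snoc[OF that(3,4)]] by simp
    then show ?thesis using GG_snoc[OF lA] lx by simp
  qed
  have distn: "is_dist (DD \<nu> t n xs)" if "n \<in> {1..T-1}" "length xs = n" for n xs
    by (rule DD_dist[OF nu tt]) (use that in auto)
  have M: "marginality T p"
    unfolding marginality_def
  proof (intro ballI allI impI)
    fix n and As :: "'a set list" and xs :: "'a list" and B C :: "'a set" assume n: "n \<in> {1..T-1}" and As: "As \<in> menus n" and xs: "xs \<in> sels As"
      and B: "B \<noteq> {}" and C: "C \<noteq> {}"
    have xs': "in_menus xs As" using xs by (simp add: sels_def)
    have lx: "length xs = n" using in_menus_length[OF xs'] As by (simp add: menus_def)
    have "(\<Sum>y\<in>D. pp T p (xs @ [y]) (As @ [D])) = GG \<nu> t xs As" if "D \<noteq> {}" for D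
    proof -
      have "(\<Sum>y\<in>D. pp T p (xs @ [y]) (As @ [D])) = (\<Sum>y\<in>D. GG \<nu> t xs As * rum (DD \<nu> t n xs) y D)"
        by (rule sum.cong) (simp_all add: step[OF n As xs'])
      also have "\<dots> = GG \<nu> t xs As * (\<Sum>y\<in>D. rum (DD \<nu> t n xs) y D)" by (simp add: sum_distrib_left)
      also have "(\<Sum>y\<in>D. rum (DD \<nu> t n xs) y D) = 1" by (rule rum_sum[OF distn[OF n lx] that])
      finally show ?thesis by simp
    qed
    then show "(\<Sum>y\<in>B. pp T p (xs @ [y]) (As @ [B])) = (\<Sum>y\<in>C. pp T p (xs @ [y]) (As @ [C]))"
      using B C by simp
  qed
  have CSI: "choice_set_independence T p"
    unfolding choice_set_independence_def
  proof (intro ballI allI impI)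
    fix n and B :: "'a set" and y :: 'a and As As' :: "'a set list" and xs :: "'a list"
    assume n: "n \<in> {1..T-1}" and B: "B \<noteq> {}" and y: "y \<in> B" and As: "As \<in> menus n" and As': "As' \<in> menus n"
      and xs: "in_menus xs As" and xs': "in_menus xs As'" and p1: "0 < pp T p xs As" and p2: "0 < pp T p xs As'"
    have "n \<le> T" using n by auto
    have "pp T p (xs @ [y]) (As @ [B]) / pp T p xs As = rum (DD \<nu> t n xs) y B"
      using step[OF n As xs y] ppG[OF As \<open>n \<le> T\<close> xs] p1 by simp
    moreover have "pp T p (xs @ [y]) (As' @ [B]) / pp T p xs As' = rum (DD \<nu> t n xs) y B"
      using step[OF n As' xs' y] ppG[OF As' \<open>n \<le> T\<close> xs'] p2 by simp
    ultimately show "pp T p (xs @ [y]) (As @ [B]) / pp T p xs As = pp T p (xs @ [y]) (As' @ [B]) / pp T p xs As'"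
      by simp
  qed
  have CM: "complete_monotonicity T p"
    unfolding complete_monotonicity_def
  proof (intro ballI)
    fix Bs :: "'a set list" and xs :: "'a list" assume Bs: "Bs \<in> menus T" and xs: "xs \<in> sels Bs"
    have xs': "in_menus xs Bs" using xs by (simp add: sels_def)
    have lB: "length Bs = T" using Bs by (simp add: menus_def)
    have lx: "length xs = T" using in_menus_length[OF xs'] lB by simp
    let ?g = "\<lambda>i A. (-1::real) ^ card (A - Bs ! i) * rum (DD \<nu> t i (take i xs)) (xs ! i) A"
    have "mobius p xs Bs = (\<Sum>As\<in>supsets Bs. (-1) ^ (\<Sum>i<T. card (As ! i - Bs ! i)) * GG \<nu> t xs As)"
      unfolding mobius_def lB
    proof (rule sum.cong)
      fix As assume As: "As \<in> supsets Bs"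
      have "As \<in> menus T" "in_menus xs As" using supsets_menus[OF xs' As] lB by simp_all
      then show "(-1) ^ (\<Sum>i<T. card (As ! i - Bs ! i)) * p xs As = (-1) ^ (\<Sum>i<T. card (As ! i - Bs ! i)) * GG \<nu> t xs As"
        using repr by simp
    qed simp
    also have "\<dots> = (\<Sum>As\<in>lists_in T (\<lambda>i. {A. Bs ! i \<subseteq> A}). \<Prod>i<T. ?g i (As ! i))"
      unfolding supsets_lists_in lB GG_def lx by (simp add: power_sum prod.distrib)
    also have "\<dots> = (\<Prod>i<T. \<Sum>A\<in>{A. Bs ! i \<subseteq> A}. ?g i A)"
      by (rule sum_prod_lists_in) simp
    also have "\<dots> \<ge> 0"
    proof (rule prod_nonneg)
      fix i assume i: "i \<in> {..<T}"
      have "is_dist (DD \<nu> t i (take i xs))" by (rule DD_dist[OF nu tt]) (use i lx in auto)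
      then have "0 \<le> mob1 (rum (DD \<nu> t i (take i xs)) (xs ! i)) (Bs ! i)" by (rule mob1_rum_nonneg)
      then show "0 \<le> (\<Sum>A\<in>{A. Bs ! i \<subseteq> A}. ?g i A)" unfolding mob1_def by simp
    qed
    finally show "0 \<le> mobius p xs Bs" .
  qed
  show ?thesis using M CM CSI by simp
qed


definition good :: "nat \<Rightarrow> ('a::finite list \<Rightarrow> 'a set list \<Rightarrow> real) \<Rightarrow> 'a list \<Rightarrow> 'a set list \<Rightarrow> bool" where
  "good T p ys Bs \<longleftrightarrow> Bs \<in> menus (length ys) \<and> in_menus ys Bs \<and> 0 < pp T p ys Bs"

definition Ach :: "nat \<Rightarrow> ('a::finite list \<Rightarrow> 'a set list \<Rightarrow> real) \<Rightarrow> 'a list \<Rightarrow> 'a set list" where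
  "Ach T p ys = (SOME Bs. good T p ys Bs)"

definition cnd :: "nat \<Rightarrow> ('a::finite list \<Rightarrow> 'a set list \<Rightarrow> real) \<Rightarrow> 'a list \<Rightarrow> 'a \<Rightarrow> 'a set \<Rightarrow> real" where
  "cnd T p ys y B = pp T p (ys @ [y]) (Ach T p ys @ [B]) / pp T p ys (Ach T p ys)"

definition tsuf :: "nat \<Rightarrow> ('a::finite list \<Rightarrow> 'a set list \<Rightarrow> real) \<Rightarrow> ('a rel \<Rightarrow> real) \<Rightarrow> nat \<Rightarrow> 'a list \<Rightarrow> 'a rel \<Rightarrow> real" where
  "tsuf T p \<nu> n ys = (if (\<exists>Bs. good T p ys Bs) \<and> 1 \<le> length ys \<and> length ys < T
      then (SOME d. is_dist d \<and> (\<forall>y B. y \<in> B \<longrightarrow> cnd T p ys y B = rum d y B)) else \<nu>)"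

lemma mob1_div: "mob1 (\<lambda>B. g B / c) B0 = mob1 g B0 / c"
  unfolding mob1_def by (simp add: sum_divide_distrib)

lemma tsuf_prop:
  fixes p :: "('a::finite) list \<Rightarrow> 'a set list \<Rightarrow> real"
  assumes M: "marginality T p" and CM: "complete_monotonicity T p"
    and l1: "1 \<le> length ys" and l2: "length ys < T" and g: "good T p ys Bs"
  shows "is_dist (tsuf T p \<nu> n ys) \<and> (\<forall>y B. y \<in> B \<longrightarrow> cnd T p ys y B = rum (tsuf T p \<nu> n ys) y B)"
proof -
  have ex: "\<exists>Bs. good T p ys Bs" using g by blast
  let ?C = "Ach T p ys"
  have gC: "good T p ys ?C" unfolding Ach_def using ex by (rule someI_ex)
  then have C: "?C \<in> menus (length ys)" "in_menus ys ?C" "0 < pp T p ys ?C" unfolding good_def by simp_all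
  have n: "length ys \<in> {1..T-1}" using l1 l2 by auto
  define P where "P = (\<lambda>d. is_dist d \<and> (\<forall>y B. y \<in> B \<longrightarrow> cnd T p ys y B = rum d y B))"
  have "\<exists>d. is_dist d \<and> (\<forall>y B. y \<in> B \<longrightarrow> cnd T p ys y B = rum d y B)"
  proof (rule falmagne)
    fix B :: "'a set" assume B: "B \<noteq> {}"
    have "(\<Sum>y\<in>B. cnd T p ys y B) = (\<Sum>y\<in>B. pp T p (ys @ [y]) (?C @ [B])) / pp T p ys ?C"
      unfolding cnd_def by (simp add: sum_divide_distrib)
    also have "\<dots> = 1" using marg_cons[OF M n C(1) C(2) B] C(3) by simp
    finally show "(\<Sum>y\<in>B. cnd T p ys y B) = 1" .
  next
    fix y :: 'a and B :: "'a set" assume y: "y \<in> B"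
    have "mob1 (cnd T p ys y) B = mob1 (\<lambda>B'. pp T p (ys @ [y]) (?C @ [B'])) B / pp T p ys ?C"
      unfolding cnd_def by (rule mob1_div)
    moreover have "0 \<le> mob1 (\<lambda>B'. pp T p (ys @ [y]) (?C @ [B'])) B"
      by (rule pp_mob_nonneg[OF CM C(1) l2 C(2) y])
    ultimately show "0 \<le> mob1 (cnd T p ys y) B" using C(3) by simp
  qed
  then have "\<exists>d. P d" unfolding P_def .
  then have "P (Eps P)" by (rule someI_ex)
  moreover have e: "tsuf T p \<nu> n ys = Eps P"
    unfolding tsuf_def P_def using ex l1 l2 by simp
  ultimately have "P (tsuf T p \<nu> n ys)" by simp
  then show ?thesis unfolding P_def by simp
qed

lemma sufficiency:
  fixes p :: "('a::finite) list \<Rightarrow> 'a set list \<Rightarrow> real"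
  assumes T: "1 \<le> T" and rj: "rjcr T p" and M: "marginality T p" and CM: "complete_monotonicity T p"
    and CSI: "choice_set_independence T p"
  shows "sicdru T p"
proof -
  have "\<exists>\<nu>. is_dist \<nu> \<and> (\<forall>x A. x \<in> A \<longrightarrow> pp T p [x] [A] = rum \<nu> x A)"
  proof (rule falmagne)
    fix A :: "'a set" assume "A \<noteq> {}"
    then show "(\<Sum>x\<in>A. pp T p [x] [A]) = 1" by (rule rho1_sum[OF rj T])
  next
    fix x :: 'a and B assume x: "x \<in> B"
    have m0: "([] :: 'a set list) \<in> menus 0" by (simp add: menus_def)
    have i0: "in_menus ([] :: 'a list) []" by (simp add: in_menus_def)
    have "0 < T" using T by simp
    from pp_mob_nonneg[OF CM m0 this i0 x]
    show "0 \<le> mob1 (\<lambda>A. pp T p [x] [A]) B" by simp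
  qed
  then obtain \<nu> where nu: "is_dist \<nu>" and nurep: "\<And>x A. x \<in> A \<Longrightarrow> pp T p [x] [A] = rum \<nu> x A" by blast
  define t where "t = tsuf T p \<nu>"
  have tt: "\<forall>n\<in>{1..T-1}. \<forall>xs. length xs = n \<longrightarrow> is_dist (t n xs)"
  proof (intro ballI allI impI)
    fix n and xs :: "'a list" assume n: "n \<in> {1..T-1}" and l: "length xs = n"
    show "is_dist (t n xs)"
    proof (cases "\<exists>Bs. good T p xs Bs")
      case True
      then obtain Bs where "good T p xs Bs" by blast
      moreover have "1 \<le> length xs" "length xs < T" using n l by auto
      ultimately show ?thesis unfolding t_def using tsuf_prop[OF M CM] by blast
    next
      case False
      have "t n xs = \<nu>" unfolding t_def tsuf_def by (simp only: False simp_thms if_False)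
      then show ?thesis using nu by simp
    qed
  qed
  have key: "pp T p (take k xs) (take k As) = GG \<nu> t (take k xs) (take k As)"
    if As: "As \<in> menus T" and xs: "in_menus xs As" and k: "1 \<le> k" "k \<le> T" for As xs k
    using k
  proof (induction k)
    case 0 then show ?case by simp
  next
    case (Suc k)
    have lA: "length As = T" using As by (simp add: menus_def)
    have lx: "length xs = T" using in_menus_length[OF xs] lA by simp
    have kT: "k < T" using Suc.prems by simp
    have yB: "xs ! k \<in> As ! k" using xs kT lx unfolding in_menus_def by (simp add: list_all2_nthD)
    have tx: "take (Suc k) xs = take k xs @ [xs ! k]" using kT lx by (simp add: take_Suc_conv_app_nth)
    have tA: "take (Suc k) As = take k As @ [As ! k]" using kT lA by (simp add: take_Suc_conv_app_nth)
    show ?case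
    proof (cases "k = 0")
      case True
      have "pp T p [xs ! 0] [As ! 0] = rum \<nu> (xs ! 0) (As ! 0)" using nurep yB True by simp
      then show ?thesis using True tx tA by (simp add: GG_def DD_def)
    next
      case False
      then have k1: "1 \<le> k" by simp
      let ?ys = "take k xs" and ?Bs = "take k As" and ?y = "xs ! k" and ?B = "As ! k"
      have IH: "pp T p ?ys ?Bs = GG \<nu> t ?ys ?Bs" using Suc.IH k1 kT by simp
      have lys: "length ?ys = k" and lBs: "length ?Bs = k" using kT lx lA by simp_all
      have "\<forall>A\<in>set ?Bs. A \<noteq> {}" using As set_take_subset[of k As] unfolding menus_def by blast
      then have Bsm: "?Bs \<in> menus k" using lBs by (simp add: menus_def)
      have ysm: "in_menus ?ys ?Bs" using xs unfolding in_menus_def by (rule list_all2_takeI)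
      have Bne: "?B \<noteq> {}" using yB by blast
      have nk: "k \<in> {1..T-1}" using k1 kT by auto
      have nn: "0 \<le> pp T p ?ys ?Bs" by (rule pp_nonneg[OF rj Bsm _ ysm]) (use kT in simp)
      have step: "pp T p (?ys @ [?y]) (?Bs @ [?B]) = pp T p ?ys ?Bs * rum (t k ?ys) ?y ?B"
      proof (cases "0 < pp T p ?ys ?Bs")
        case True
        have g: "good T p ?ys ?Bs" unfolding good_def using Bsm ysm True lys by simp
        have tp: "cnd T p ?ys ?y ?B = rum (t k ?ys) ?y ?B"
          using tsuf_prop[OF M CM _ _ g, of \<nu> k] k1 kT lys yB unfolding t_def by simp
        have ex: "\<exists>Bs. good T p ?ys Bs" using g by blast
        have gC: "good T p ?ys (Ach T p ?ys)" unfolding Ach_def using ex by (rule someI_ex)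
        then have C: "Ach T p ?ys \<in> menus k" "in_menus ?ys (Ach T p ?ys)" "0 < pp T p ?ys (Ach T p ?ys)"
          unfolding good_def using lys by simp_all
        have "pp T p (?ys @ [?y]) (?Bs @ [?B]) / pp T p ?ys ?Bs
            = pp T p (?ys @ [?y]) (Ach T p ?ys @ [?B]) / pp T p ?ys (Ach T p ?ys)"
          using CSI nk Bne yB Bsm C(1) ysm C(2) True C(3) unfolding choice_set_independence_def by blast
        then have "pp T p (?ys @ [?y]) (?Bs @ [?B]) / pp T p ?ys ?Bs = rum (t k ?ys) ?y ?B"
          using tp unfolding cnd_def by simp
        then show ?thesis using True by (simp add: divide_eq_eq mult.commute)
      next
        case False
        then have z: "pp T p ?ys ?Bs = 0" using nn by simp
        have s0: "(\<Sum>z\<in>?B. pp T p (?ys @ [z]) (?Bs @ [?B])) = 0"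
          using marg_cons[OF M nk Bsm ysm Bne] z by simp
        have nn2: "\<forall>z\<in>?B. 0 \<le> pp T p (?ys @ [z]) (?Bs @ [?B])"
        proof
          fix z assume "z \<in> ?B"
          then have "in_menus (?ys @ [z]) (?Bs @ [?B])" by (rule in_menus_snoc[OF ysm])
          moreover have "?Bs @ [?B] \<in> menus (Suc k)" by (rule menus_snoc[OF Bsm Bne])
          ultimately show "0 \<le> pp T p (?ys @ [z]) (?Bs @ [?B])"
            using pp_nonneg[OF rj] Suc.prems by blast
        qed
        have "pp T p (?ys @ [?y]) (?Bs @ [?B]) = 0"
          using s0 nn2 yB by (simp add: sum_nonneg_eq_0_iff)
        then show ?thesis using z by simp
      qed
      have "GG \<nu> t (?ys @ [?y]) (?Bs @ [?B]) = GG \<nu> t ?ys ?Bs * rum (t k ?ys) ?y ?B"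
        using GG_snoc[of ?Bs ?ys \<nu> t ?y ?B] lys lBs False by (simp add: DD_def)
      then show ?thesis using step IH tx tA by simp
    qed
  qed
  have repr: "p xs As = GG \<nu> t xs As" if As: "As \<in> menus T" and xs: "in_menus xs As" for As xs
  proof -
    have lA: "length As = T" using As by (simp add: menus_def)
    have lx: "length xs = T" using in_menus_length[OF xs] lA by simp
    have "pp T p (take T xs) (take T As) = GG \<nu> t (take T xs) (take T As)" by (rule key[OF As xs T order_refl])
    then have "pp T p xs As = GG \<nu> t xs As" using lA lx by simp
    then show ?thesis unfolding pp_def using lx by simp
  qed
  have R: "\<forall>As\<in>menus T. \<forall>xs\<in>sels As.
        p xs As = (\<Sum>rs\<in>{rs. length rs = T \<and> (\<forall>i<T. rs ! i \<in> Nset (xs ! i) (As ! i))}.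
                     \<nu> (rs ! 0) * (\<Prod>i\<in>{1..<T}. t i (take i xs) (rs ! i)))"
  proof (intro ballI)
    fix As :: "'a set list" and xs :: "'a list" assume As: "As \<in> menus T" and xs: "xs \<in> sels As"
    have xs': "in_menus xs As" using xs by (simp add: sels_def)
    have lx: "length xs = T" using in_menus_length[OF xs'] As by (simp add: menus_def)
    show "p xs As = (\<Sum>rs\<in>{rs. length rs = T \<and> (\<forall>i<T. rs ! i \<in> Nset (xs ! i) (As ! i))}.
                     \<nu> (rs ! 0) * (\<Prod>i\<in>{1..<T}. t i (take i xs) (rs ! i)))"
      using repr[OF As xs'] sicdru_formula[OF T lx, of \<nu> t As] by simp
  qed
  show ?thesis unfolding sicdru_def using nu tt R by blast
qed

theorem theorem13:
  fixes p :: "'a::finite list \<Rightarrow> 'a set list \<Rightarrow> real" and T :: nat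
  assumes "T \<ge> 1" and "rjcr T p"
  shows "sicdru T p \<longleftrightarrow>
           marginality T p \<and> complete_monotonicity T p \<and> choice_set_independence T p"
  using necessity[OF assms(1)] sufficiency[OF assms(1,2)] by blast


end
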